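(* Let $D$ be a domain in a metric measure space $(X,d,\mu)$ of finite Hausdorff dimension $\alpha\geqslant2$ and let $(X',d',\mu')$ be a metric measure space of finite Hausdorff dimension $\alpha'\geqslant2$. Let $Q:D\to[0,\infty]$ be measurable, let $f:D\to X'$ be an open discrete mapping which is a ring $Q$-mapping at $x_0\in D$, and let $0<\varepsilon_0<\operatorname{dist}(x_0,\partial D)$ be such that $\overline{B(x_0,\varepsilon_0)}$ is a compact subset of $D$. Assume that for some $\varepsilon_0'\in(0,\varepsilon_0)$, some function $F(\varepsilon,\varepsilon_0)$ and some family of nonnegative Lebesgue measurable functions $\psi_\varepsilon:(\varepsilon,\varepsilon_0)\to[0,\infty]$, $\varepsilon\in(0,\varepsilon_0')$, $\int_{\varepsilon<d(x,x_0)<\varepsilon_0}Q(x)\psi_\varepsilon^\alpha(d(x,x_0))\,d\mu(x)\leqslant F(\varepsilon,\varepsilon_0)$ and $0<I(\varepsilon,\varepsilon_0):=\int_\varepsilon^{\varepsilon_0}\psi_\varepsilon(t)\,dt<\infty$ for all $\varepsilon\in(0,\varepsilon_0')$. If $f$ satisfies condition $\mathbf{A}$, then $M_{\alpha'}\big(\Gamma(f(\overline{B(x_0,\varepsilon)}),\partial f(B(x_0,\varepsilon_0)),X')\big)\leqslant F(\varepsilon,\varepsilon_0)/I^\alpha(\varepsilon,\varepsilon_0)$ for all $\varepsilon\in(0,\varepsilon_0')$.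
   Context: $(X,d,\mu)$, $(X',d',\mu')$ are metric spaces with locally finite Borel measures. $B(x_0,r)=\{x:d(x,x_0)<r\}$, $S(x_0,r)=\{x:d(x,x_0)=r\}$, $A(x_0,r_1,r_2)=\{x:r_1<d(x,x_0)<r_2\}$. $\Gamma(E,F,H)$ is the family of continuous curves $\gamma:[0,1]\to X$ (resp. $X'$) with $\gamma(0)\in E$, $\gamma(1)\in F$, $\gamma(t)\in H$ for $t\in(0,1)$. A Borel $\rho\geqslant0$ is admissible for $\Gamma$ if $\int_\gamma\rho\,ds\geqslant1$ for each locally rectifiable $\gamma\in\Gamma$; $M_{\alpha'}(\Gamma)=\inf_\rho\int_{X'}\rho^{\alpha'}d\mu'$. $f:D\to X'$ is a ring $Q$-mapping at $x_0$ if for all $0<r_1<r_2<\infty$ and every Lebesgue measurable $\eta:(r_1,r_2)\to[0,\infty]$ with $\int_{r_1}^{r_2}\eta\,dr\geqslant1$: $M_{\alpha'}(f(\Gamma(S(x_0,r_1),S(x_0,r_2),A(x_0,r_1,r_2))))\leqslant\int_{A(x_0,r_1,r_2)\cap D}Q(x)\eta^\alpha(d(x,x_0))\,d\mu(x)$. A mapping is discrete if preimages of points are discrete sets, open if it maps open sets to open sets. For an open discrete $f:D\to X'$, a curve $\beta:[a,b)\to X'$ and $x\in f^{-1}(\beta(a))$, a curve $\alpha:[a,c)\to D$ is a maximal $f$-lifting of $\beta$ starting at $x$ if $\alpha(a)=x$, $f\circ\alpha=\beta|_{[a,c)}$, and for no $c<c'\leqslant b$ is there a curve $\alpha':[a,c')\to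 D$ with $\alpha=\alpha'|_{[a,c)}$ and $f\circ\alpha'=\beta|_{[a,c')}$. Condition $\mathbf{A}$: for every curve $\beta:[a,b)\to X'$ and every $x\in f^{-1}(\beta(a))$, $f$ has a maximal $f$-lifting of $\beta$ starting at $x$. *)

theory Defs
  imports "HOL-Analysis.Analysis"
begin

definition hcost :: "real \<Rightarrow> 'a::metric_space set \<Rightarrow> ennreal" where
  "hcost s U = (if U = {} then 0 else if s = 0 then 1 else ennreal (diameter U powr s))"

definition hausdorff_content :: "real \<Rightarrow> real \<Rightarrow> 'a::metric_space set \<Rightarrow> ennreal" where
  "hausdorff_content s \<delta> A =
     (INF U \<in> {U :: nat \<Rightarrow> 'a set. A \<subseteq> (\<Union>i. U i) \<and> (\<forall>i. bounded (U i) \<and> diameter (U i) < \<delta>)}.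
        (\<Sum>i. hcost s (U i)))"

definition hausdorff_measure :: "real \<Rightarrow> 'a::metric_space set \<Rightarrow> ennreal" where
  "hausdorff_measure s A = (SUP \<delta> \<in> {0<..}. hausdorff_content s \<delta> A)"

definition hausdorff_dim :: "'a::metric_space set \<Rightarrow> ereal" where
  "hausdorff_dim A = Inf {ereal s | s. 0 \<le> s \<and> hausdorff_measure s A = 0}"

definition locally_finite_borel :: "'a::metric_space measure \<Rightarrow> bool" where
  "locally_finite_borel \<mu> \<longleftrightarrow> sets \<mu> = sets borel \<and>
     (\<forall>x. \<exists>r>0. emeasure \<mu> (ball x r) < \<infinity>)"

definition curve_length :: "(real \<Rightarrow> 'a::metric_space) \<Rightarrow> real \<Rightarrow> real \<Rightarrow> ennreal" where
  "curve_length \<gamma> a b = (SUP p \<in> {(n, t). t 0 = a \<and> t n = b \<and> (\<forall>i<n. t i \<le> t (Suc i))}.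
      (case p of (n, t) \<Rightarrow> (\<Sum>i<n. ennreal (dist (\<gamma> (t i)) (\<gamma> (t (Suc i)))))))"

definition loc_rectifiable :: "(real \<Rightarrow> 'a::metric_space) \<Rightarrow> bool" where
  "loc_rectifiable \<gamma> \<longleftrightarrow> (\<forall>a b. 0 \<le> a \<and> a \<le> b \<and> b \<le> 1 \<longrightarrow> curve_length \<gamma> a b < \<infinity>)"

definition arclen_fun :: "(real \<Rightarrow> 'a::metric_space) \<Rightarrow> real \<Rightarrow> real" where
  "arclen_fun \<gamma> t = enn2real (curve_length \<gamma> 0 t)"

definition arc_param :: "(real \<Rightarrow> 'a::metric_space) \<Rightarrow> real \<Rightarrow> 'a" where
  "arc_param \<gamma> s = \<gamma> (SOME t. t \<in> {0..1} \<and> arclen_fun \<gamma> t = s)"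

definition line_integral :: "('a::metric_space \<Rightarrow> ennreal) \<Rightarrow> (real \<Rightarrow> 'a) \<Rightarrow> ennreal" where
  "line_integral \<rho> \<gamma> = (\<integral>\<^sup>+ s \<in> {0..arclen_fun \<gamma> 1}. \<rho> (arc_param \<gamma> s) \<partial>lborel)"

definition curve_family :: "'a::metric_space set \<Rightarrow> 'a set \<Rightarrow> 'a set \<Rightarrow> (real \<Rightarrow> 'a) set" where
  "curve_family E F H = {\<gamma>. continuous_on {0..1} \<gamma> \<and> \<gamma> 0 \<in> E \<and> \<gamma> 1 \<in> F \<and>
       (\<forall>t\<in>{0<..<1}. \<gamma> t \<in> H)}"

definition epow :: "ennreal \<Rightarrow> real \<Rightarrow> ennreal" where
  "epow x p = (if x = \<infinity> then \<infinity> else ennreal (enn2real x powr p))"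

definition admissible :: "('a::metric_space \<Rightarrow> ennreal) \<Rightarrow> (real \<Rightarrow> 'a) set \<Rightarrow> bool" where
  "admissible \<rho> \<Gamma> \<longleftrightarrow> \<rho> \<in> borel_measurable borel \<and>
     (\<forall>\<gamma>\<in>\<Gamma>. loc_rectifiable \<gamma> \<longrightarrow> line_integral \<rho> \<gamma> \<ge> 1)"

definition modulus :: "'a::metric_space measure \<Rightarrow> real \<Rightarrow> (real \<Rightarrow> 'a) set \<Rightarrow> ennreal" where
  "modulus \<mu> p \<Gamma> = (INF \<rho> \<in> {\<rho>. admissible \<rho> \<Gamma>}. \<integral>\<^sup>+ x. epow (\<rho> x) p \<partial>\<mu>)"

definition image_family :: "('a \<Rightarrow> 'b) \<Rightarrow> 'a set \<Rightarrow> (real \<Rightarrow> 'a) set \<Rightarrow> (real \<Rightarrow> 'b) set" where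
  "image_family f D \<Gamma> = (\<lambda>\<gamma>. f \<circ> \<gamma>) ` {\<gamma>\<in>\<Gamma>. \<gamma> ` {0..1} \<subseteq> D}"

definition sphere_set :: "'a::metric_space \<Rightarrow> real \<Rightarrow> 'a set" where
  "sphere_set x0 r = {x. dist x x0 = r}"

definition annulus :: "'a::metric_space \<Rightarrow> real \<Rightarrow> real \<Rightarrow> 'a set" where
  "annulus x0 r1 r2 = {x. r1 < dist x x0 \<and> dist x x0 < r2}"

definition ring_Q_mapping ::
  "'a::metric_space measure \<Rightarrow> real \<Rightarrow> 'b::metric_space measure \<Rightarrow> real \<Rightarrow>
   'a set \<Rightarrow> ('a \<Rightarrow> 'b) \<Rightarrow> ('a \<Rightarrow> ennreal) \<Rightarrow> 'a \<Rightarrow> bool" where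
  "ring_Q_mapping \<mu> \<alpha> \<mu>' \<alpha>' D f Q x0 \<longleftrightarrow>
     (\<forall>r1 r2 (\<eta>::real \<Rightarrow> ennreal). 0 < r1 \<and> r1 < r2 \<and> \<eta> \<in> borel_measurable lebesgue \<and>
        (\<integral>\<^sup>+ r \<in> {r1<..<r2}. \<eta> r \<partial>lebesgue) \<ge> 1 \<longrightarrow>
        modulus \<mu>' \<alpha>' (image_family f D
            (curve_family (sphere_set x0 r1) (sphere_set x0 r2) (annulus x0 r1 r2)))
          \<le> (\<integral>\<^sup>+ x \<in> annulus x0 r1 r2 \<inter> D. Q x * epow (\<eta> (dist x x0)) \<alpha> \<partial>\<mu>))"

definition discrete_map :: "'a::metric_space set \<Rightarrow> ('a \<Rightarrow> 'b) \<Rightarrow> bool" where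
  "discrete_map D f \<longleftrightarrow> (\<forall>y. \<forall>x \<in> D \<inter> f -` {y}. \<exists>r>0. ball x r \<inter> (D \<inter> f -` {y}) = {x})"

definition open_map_on :: "'a::topological_space set \<Rightarrow> ('a \<Rightarrow> 'b::topological_space) \<Rightarrow> bool" where
  "open_map_on D f \<longleftrightarrow> (\<forall>U. open U \<and> U \<subseteq> D \<longrightarrow> open (f ` U))"

definition is_lifting ::
  "'a set \<Rightarrow> ('a \<Rightarrow> 'b::topological_space) \<Rightarrow> (real \<Rightarrow> 'b) \<Rightarrow> real \<Rightarrow> real \<Rightarrow> (real \<Rightarrow> 'a::topological_space) \<Rightarrow> bool" where
  "is_lifting D f \<beta> a c \<alpha> \<longleftrightarrow> continuous_on {a..<c} \<alpha> \<and> \<alpha> ` {a..<c} \<subseteq> D \<and>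
      (\<forall>t\<in>{a..<c}. f (\<alpha> t) = \<beta> t)"

definition max_lifting ::
  "'a set \<Rightarrow> ('a \<Rightarrow> 'b::topological_space) \<Rightarrow> (real \<Rightarrow> 'b) \<Rightarrow> real \<Rightarrow> real \<Rightarrow> 'a \<Rightarrow> real \<Rightarrow> (real \<Rightarrow> 'a::topological_space) \<Rightarrow> bool" where
  "max_lifting D f \<beta> a b x c \<alpha> \<longleftrightarrow> a < c \<and> c \<le> b \<and> \<alpha> a = x \<and> is_lifting D f \<beta> a c \<alpha> \<and>
     \<not> (\<exists>c' \<alpha>'. c < c' \<and> c' \<le> b \<and> is_lifting D f \<beta> a c' \<alpha>' \<and> (\<forall>t\<in>{a..<c}. \<alpha>' t = \<alpha> t))"

definition condition_A :: "'a::topological_space set \<Rightarrow> ('a \<Rightarrow> 'b::topological_space) \<Rightarrow> bool" where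
  "condition_A D f \<longleftrightarrow> (\<forall>\<beta> a b x. a < b \<and> continuous_on {a..<b} \<beta> \<and> x \<in> D \<and> f x = \<beta> a \<longrightarrow>
      (\<exists>c \<alpha>. max_lifting D f \<beta> a b x c \<alpha>))"

end

theory Submission
  imports Defs
begin

definition parts :: "real \<Rightarrow> real \<Rightarrow> (nat \<times> (nat \<Rightarrow> real)) set" where
  "parts a b = {(n, t). t 0 = a \<and> t n = b \<and> (\<forall>i<n. t i \<le> t (Suc i))}"

definition psum :: "(real \<Rightarrow> 'a::metric_space) \<Rightarrow> nat \<times> (nat \<Rightarrow> real) \<Rightarrow> ennreal" where
  "psum \<gamma> p = (case p of (n, t) \<Rightarrow> (\<Sum>i<n. ennreal (dist (\<gamma> (t i)) (\<gamma> (t (Suc i))))))"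

lemma cl_def: "curve_length \<gamma> a b = (SUP p \<in> parts a b. psum \<gamma> p)"
  unfolding curve_length_def parts_def psum_def by simp

lemma parts_mono:
  assumes "(n, t) \<in> parts a b" "i \<le> j" "j \<le> n"
  shows "t i \<le> t j"
  using assms(2,3)
proof (induction j rule: dec_induct)
  case base then show ?case by simp
next
  case (step k)
  then have "t k \<le> t (Suc k)" using assms(1) by (auto simp: parts_def)
  then show ?case using step by simp
qed

lemma parts_range:
  assumes "(n, t) \<in> parts a b" "i \<le> n"
  shows "a \<le> t i \<and> t i \<le> b"
  using parts_mono[OF assms(1), of 0 i] parts_mono[OF assms(1), of i n] assms
  by (auto simp: parts_def)

lemma parts_le: "(n, t) \<in> parts a b \<Longrightarrow> a \<le> b"
  using parts_range[of n t a b n] by auto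

lemma parts_one: "a \<le> b \<Longrightarrow> (1, \<lambda>i. if i = 0 then a else b) \<in> parts a b"
  by (auto simp: parts_def)

lemma parts_ne: "a \<le> b \<Longrightarrow> parts a b \<noteq> {}"
  using parts_one by blast

lemma psum_one: "psum \<gamma> (1, \<lambda>i. if i = 0 then a else b) = ennreal (dist (\<gamma> a) (\<gamma> b))"
  by (simp add: psum_def)

lemma dist_le_cl: "a \<le> b \<Longrightarrow> ennreal (dist (\<gamma> a) (\<gamma> b)) \<le> curve_length \<gamma> a b"
  unfolding cl_def using parts_one[of a b] psum_one[of \<gamma> a b]
  by (metis SUP_upper)

lemma psum_upper: "p \<in> parts a b \<Longrightarrow> psum \<gamma> p \<le> curve_length \<gamma> a b"
  unfolding cl_def by (rule SUP_upper)

definition pcons :: "real \<Rightarrow> nat \<times> (nat \<Rightarrow> real) \<Rightarrow> nat \<times> (nat \<Rightarrow> real)" where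
  "pcons x p = (case p of (m, u) \<Rightarrow> (Suc m, \<lambda>i. case i of 0 \<Rightarrow> x | Suc j \<Rightarrow> u j))"

lemma pcons_parts:
  assumes "(m, u) \<in> parts a' c" "a \<le> a'"
  shows "pcons a (m, u) \<in> parts a c"
  using assms unfolding parts_def pcons_def
  by (auto simp: less_Suc_eq_0_disj)

lemma psum_pcons:
  "psum \<gamma> (pcons a (m, u)) = ennreal (dist (\<gamma> a) (\<gamma> (u 0))) + psum \<gamma> (m, u)"
  unfolding psum_def pcons_def by (simp only: prod.case sum.lessThan_Suc_shift nat.case)

lemma ptail:
  assumes "(Suc m, t) \<in> parts a c"
  shows "(m, \<lambda>i. t (Suc i)) \<in> parts (t 1) c" "a \<le> t 1"
    "psum \<gamma> (Suc m, t) = ennreal (dist (\<gamma> a) (\<gamma> (t 1))) + psum \<gamma> (m, \<lambda>i. t (Suc i))"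
  using assms unfolding parts_def psum_def
  by (auto simp only: prod.case sum.lessThan_Suc_shift mem_Collect_eq One_nat_def intro: less_SucI)

lemma cl_empty: assumes "b < a" shows "curve_length \<gamma> a b = 0"
proof -
  have "parts a b = {}" using parts_le[of _ _ a b] assms by force
  then show ?thesis unfolding cl_def by (simp add: bot_ennreal)
qed

lemma cl_cons:
  assumes "a \<le> a'" "a' \<le> c"
  shows "ennreal (dist (\<gamma> a) (\<gamma> a')) + curve_length \<gamma> a' c \<le> curve_length \<gamma> a c"
proof -
  have "ennreal (dist (\<gamma> a) (\<gamma> a')) + curve_length \<gamma> a' c
      = (SUP p \<in> parts a' c. ennreal (dist (\<gamma> a) (\<gamma> a')) + psum \<gamma> p)"
    unfolding cl_def using parts_ne[OF assms(2)] by (simp add: ennreal_SUP_add_right)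
  also have "\<dots> \<le> curve_length \<gamma> a c"
  proof (rule SUP_least)
    fix p assume p: "p \<in> parts a' c"
    obtain m u where pu: "p = (m, u)" by (cases p)
    have "u 0 = a'" using p pu by (simp add: parts_def)
    then have "ennreal (dist (\<gamma> a) (\<gamma> a')) + psum \<gamma> p = psum \<gamma> (pcons a (m, u))"
      by (simp add: psum_pcons pu)
    also have "\<dots> \<le> curve_length \<gamma> a c"
      by (rule psum_upper, rule pcons_parts) (use p pu assms in auto)
    finally show "ennreal (dist (\<gamma> a) (\<gamma> a')) + psum \<gamma> p \<le> curve_length \<gamma> a c" .
  qed
  finally show ?thesis .
qed

lemma cl_add_ge:
  assumes "a \<le> b" "b \<le> c"
  shows "curve_length \<gamma> a b + curve_length \<gamma> b c \<le> curve_length \<gamma> a c"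
proof -
  have key: "\<forall>a t. (n, t) \<in> parts a b \<longrightarrow> psum \<gamma> (n, t) + curve_length \<gamma> b c \<le> curve_length \<gamma> a c" for n
  proof (induction n)
    case 0
    show ?case by (auto simp: parts_def psum_def)
  next
    case (Suc m)
    show ?case
    proof (intro allI impI)
      fix a t assume p: "(Suc m, t) \<in> parts a b"
      note tl = ptail(1,2)[OF p] ptail(3)[OF p, of \<gamma>]
      have t1b: "t 1 \<le> b" using parts_le[OF tl(1)] .
      have "psum \<gamma> (Suc m, t) + curve_length \<gamma> b c
          = ennreal (dist (\<gamma> a) (\<gamma> (t 1))) + (psum \<gamma> (m, \<lambda>i. t (Suc i)) + curve_length \<gamma> b c)"
        by (simp add: tl(3) add.assoc)
      also have "\<dots> \<le> ennreal (dist (\<gamma> a) (\<gamma> (t 1))) + curve_length \<gamma> (t 1) c"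
        using Suc.IH tl(1) by (intro add_left_mono) blast
      also have "\<dots> \<le> curve_length \<gamma> a c"
        by (rule cl_cons) (use tl(2) t1b assms in auto)
      finally show "psum \<gamma> (Suc m, t) + curve_length \<gamma> b c \<le> curve_length \<gamma> a c" .
    qed
  qed
  have "curve_length \<gamma> a b + curve_length \<gamma> b c = (SUP p \<in> parts a b. psum \<gamma> p + curve_length \<gamma> b c)"
    unfolding cl_def[of \<gamma> a b] using parts_ne[OF assms(1)] by (simp add: ennreal_SUP_add_left)
  also have "\<dots> \<le> curve_length \<gamma> a c"
    using key by (intro SUP_least) auto
  finally show ?thesis .
qed

lemma cl_add_le:
  assumes "a \<le> b" "b \<le> c"
  shows "curve_length \<gamma> a c \<le> curve_length \<gamma> a b + curve_length \<gamma> b c"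
proof -
  have key: "\<forall>a t. (n, t) \<in> parts a c \<and> a \<le> b \<longrightarrow> psum \<gamma> (n, t) \<le> curve_length \<gamma> a b + curve_length \<gamma> b c" for n
  proof (induction n)
    case 0
    show ?case by (auto simp: parts_def psum_def)
  next
    case (Suc m)
    show ?case
    proof (intro allI impI)
      fix a t assume p: "(Suc m, t) \<in> parts a c \<and> a \<le> b"
      note tl = ptail(1,2)[OF conjunct1[OF p]] ptail(3)[OF conjunct1[OF p], of \<gamma>]
      show "psum \<gamma> (Suc m, t) \<le> curve_length \<gamma> a b + curve_length \<gamma> b c"
      proof (cases "t 1 \<le> b")
        case True
        have "psum \<gamma> (Suc m, t) \<le> ennreal (dist (\<gamma> a) (\<gamma> (t 1))) + (curve_length \<gamma> (t 1) b + curve_length \<gamma> b c)"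
          unfolding tl(3) using Suc.IH tl(1) True by (intro add_left_mono) blast
        also have "\<dots> = (ennreal (dist (\<gamma> a) (\<gamma> (t 1))) + curve_length \<gamma> (t 1) b) + curve_length \<gamma> b c"
          by (simp add: add.assoc)
        also have "\<dots> \<le> curve_length \<gamma> a b + curve_length \<gamma> b c"
          by (intro add_right_mono cl_cons) (use tl(2) True in auto)
        finally show ?thesis .
      next
        case False
        have "ennreal (dist (\<gamma> a) (\<gamma> (t 1))) \<le> ennreal (dist (\<gamma> a) (\<gamma> b)) + ennreal (dist (\<gamma> b) (\<gamma> (t 1)))"
          by (simp add: ennreal_plus[symmetric] del: ennreal_plus) (rule dist_triangle)
        then have "psum \<gamma> (Suc m, t) \<le> (ennreal (dist (\<gamma> a) (\<gamma> b)) + ennreal (dist (\<gamma> b) (\<gamma> (t 1)))) + psum \<gamma> (m, \<lambda>i. t (Suc i))"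
          unfolding tl(3) by (rule add_right_mono)
        also have "\<dots> = ennreal (dist (\<gamma> a) (\<gamma> b)) + (ennreal (dist (\<gamma> b) (\<gamma> (t 1))) + psum \<gamma> (m, \<lambda>i. t (Suc i)))"
          by (simp add: add.assoc)
        also have "ennreal (dist (\<gamma> b) (\<gamma> (t 1))) + psum \<gamma> (m, \<lambda>i. t (Suc i)) = psum \<gamma> (pcons b (m, \<lambda>i. t (Suc i)))"
          by (simp add: psum_pcons)
        also have "\<dots> \<le> curve_length \<gamma> b c"
          by (rule psum_upper, rule pcons_parts[OF tl(1)]) (use False in auto)
        finally have "psum \<gamma> (Suc m, t) \<le> ennreal (dist (\<gamma> a) (\<gamma> b)) + curve_length \<gamma> b c"
          by - (simp add: add_left_mono)
        also have "\<dots> \<le> curve_length \<gamma> a b + curve_length \<gamma> b c"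
          using dist_le_cl[of a b \<gamma>] p by (intro add_right_mono) auto
        finally show ?thesis .
      qed
    qed
  qed
  show ?thesis unfolding cl_def[of \<gamma> a c]
    by (rule SUP_least) (use key assms in auto)
qed

lemma cl_add:
  assumes "a \<le> b" "b \<le> c"
  shows "curve_length \<gamma> a c = curve_length \<gamma> a b + curve_length \<gamma> b c"
  using cl_add_le[OF assms] cl_add_ge[OF assms] by (rule antisym)

lemma cl_cong:
  assumes "\<And>s. s \<in> {a..b} \<Longrightarrow> g s = h s"
  shows "curve_length g a b = curve_length h a b"
  unfolding cl_def
proof (rule SUP_cong[OF refl])
  fix p assume p: "p \<in> parts a b"
  obtain n t where pn: "p = (n, t)" by (cases p)
  have "\<And>i. i < n \<Longrightarrow> g (t i) = h (t i) \<and> g (t (Suc i)) = h (t (Suc i))"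
    using parts_range[of n t a b] p pn assms by (metis Suc_leI atLeastAtMost_iff less_imp_le)
  then show "psum g p = psum h p" unfolding pn psum_def by (auto intro!: sum.cong)
qed

lemma cl_aff:
  fixes k :: real
  assumes k: "k > 0"
  shows "curve_length (\<lambda>s. \<gamma> (a + s * k)) u v = curve_length \<gamma> (a + u * k) (a + v * k)"
  unfolding cl_def
proof (rule antisym)
  show "(SUP p\<in>parts u v. psum (\<lambda>s. \<gamma> (a + s * k)) p) \<le> (SUP p\<in>parts (a + u * k) (a + v * k). psum \<gamma> p)"
  proof (rule SUP_mono)
    fix p assume p: "p \<in> parts u v"
    obtain n t where pn: "p = (n, t)" by (cases p)
    have "(n, \<lambda>i. a + t i * k) \<in> parts (a + u * k) (a + v * k)"
      using p pn k by (auto simp: parts_def intro: mult_right_mono)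
    moreover have "psum (\<lambda>s. \<gamma> (a + s * k)) p = psum \<gamma> (n, \<lambda>i. a + t i * k)"
      by (simp add: pn psum_def)
    ultimately show "\<exists>m\<in>parts (a + u * k) (a + v * k). psum (\<lambda>s. \<gamma> (a + s * k)) p \<le> psum \<gamma> m"
      by (intro bexI[of _ "(n, \<lambda>i. a + t i * k)"]) auto
  qed
  show "(SUP p\<in>parts (a + u * k) (a + v * k). psum \<gamma> p) \<le> (SUP p\<in>parts u v. psum (\<lambda>s. \<gamma> (a + s * k)) p)"
  proof (rule SUP_mono)
    fix p assume p: "p \<in> parts (a + u * k) (a + v * k)"
    obtain n t where pn: "p = (n, t)" by (cases p)
    have "(n, \<lambda>i. (t i - a) / k) \<in> parts u v"
      using p pn k by (auto simp: parts_def intro: divide_right_mono)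
    moreover have "psum \<gamma> p = psum (\<lambda>s. \<gamma> (a + s * k)) (n, \<lambda>i. (t i - a) / k)"
      using k by (simp add: pn psum_def)
    ultimately show "\<exists>m\<in>parts u v. psum \<gamma> p \<le> psum (\<lambda>s. \<gamma> (a + s * k)) m"
      by (intro bexI[of _ "(n, \<lambda>i. (t i - a) / k)"]) auto
  qed
qed

lemma psum_le_right:
  assumes "(n, t) \<in> parts a c" "a < x" "\<forall>i\<le>n. t i = a \<or> x \<le> t i"
  shows "psum \<gamma> (n, t) \<le> ennreal (dist (\<gamma> a) (\<gamma> x)) + curve_length \<gamma> x c"
  using assms
proof (induction n arbitrary: t)
  case 0
  then show ?case by (simp add: psum_def)
next
  case (Suc m)
  note tl = ptail(1,2)[OF Suc.prems(1)] ptail(3)[OF Suc.prems(1), of \<gamma>]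
  show ?case
  proof (cases "t 1 = a")
    case True
    have "psum \<gamma> (m, \<lambda>i. t (Suc i)) \<le> ennreal (dist (\<gamma> a) (\<gamma> x)) + curve_length \<gamma> x c"
      by (rule Suc.IH) (use tl(1) True Suc.prems in auto)
    then show ?thesis unfolding tl(3) using True by simp
  next
    case False
    then have xt: "x \<le> t 1" using Suc.prems(3) by (metis One_nat_def Suc_le_mono le0)
    have "ennreal (dist (\<gamma> a) (\<gamma> (t 1))) \<le> ennreal (dist (\<gamma> a) (\<gamma> x)) + ennreal (dist (\<gamma> x) (\<gamma> (t 1)))"
      by (simp add: ennreal_plus[symmetric] del: ennreal_plus) (rule dist_triangle)
    then have "psum \<gamma> (Suc m, t) \<le> (ennreal (dist (\<gamma> a) (\<gamma> x)) + ennreal (dist (\<gamma> x) (\<gamma> (t 1)))) + psum \<gamma> (m, \<lambda>i. t (Suc i))"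
      unfolding tl(3) by (rule add_right_mono)
    also have "\<dots> = ennreal (dist (\<gamma> a) (\<gamma> x)) + psum \<gamma> (pcons x (m, \<lambda>i. t (Suc i)))"
      by (simp add: psum_pcons add.assoc)
    also have "\<dots> \<le> ennreal (dist (\<gamma> a) (\<gamma> x)) + curve_length \<gamma> x c"
      by (intro add_left_mono psum_upper pcons_parts[OF tl(1)] xt)
    finally show ?thesis .
  qed
qed

lemma psum_le_left:
  assumes "(n, t) \<in> parts a c" "\<forall>i\<le>n. t i = c \<or> t i \<le> x"
  shows "psum \<gamma> (n, t) \<le> curve_length \<gamma> a x + ennreal (dist (\<gamma> x) (\<gamma> c))"
  using assms
proof (induction n arbitrary: a t)
  case 0
  then show ?case by (simp add: psum_def)
next
  case (Suc m)
  note tl = ptail(1,2)[OF Suc.prems(1)] ptail(3)[OF Suc.prems(1), of \<gamma>]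
  have a0: "t 0 = a" using Suc.prems(1) by (simp add: parts_def)
  show ?case
  proof (cases "t 1 = c")
    case True
    have "\<forall>i<m. t (Suc i) = c \<and> t (Suc (Suc i)) = c"
      using parts_range[OF tl(1)] True by (metis Suc_leI less_imp_le order_antisym)
    then have "psum \<gamma> (m, \<lambda>i. t (Suc i)) = 0" by (simp add: psum_def)
    then have ps: "psum \<gamma> (Suc m, t) = ennreal (dist (\<gamma> a) (\<gamma> c))" using tl(3) True by simp
    show ?thesis
    proof (cases "a = c")
      case True then show ?thesis using ps by simp
    next
      case False
      then have ax: "a \<le> x" using Suc.prems(2) a0 by (metis le0)
      have "ennreal (dist (\<gamma> a) (\<gamma> c)) \<le> ennreal (dist (\<gamma> a) (\<gamma> x)) + ennreal (dist (\<gamma> x) (\<gamma> c))"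
        by (simp add: ennreal_plus[symmetric] del: ennreal_plus) (rule dist_triangle)
      also have "\<dots> \<le> curve_length \<gamma> a x + ennreal (dist (\<gamma> x) (\<gamma> c))"
        by (intro add_right_mono dist_le_cl ax)
      finally show ?thesis using ps by simp
    qed
  next
    case False
    then have tx: "t 1 \<le> x" using Suc.prems(2) by (metis One_nat_def Suc_le_mono le0)
    have "psum \<gamma> (m, \<lambda>i. t (Suc i)) \<le> curve_length \<gamma> (t 1) x + ennreal (dist (\<gamma> x) (\<gamma> c))"
      by (rule Suc.IH) (use tl(1) Suc.prems in auto)
    then have "psum \<gamma> (Suc m, t) \<le> (ennreal (dist (\<gamma> a) (\<gamma> (t 1))) + curve_length \<gamma> (t 1) x) + ennreal (dist (\<gamma> x) (\<gamma> c))"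
      unfolding tl(3) by (simp add: add.assoc add_left_mono)
    also have "\<dots> \<le> curve_length \<gamma> a x + ennreal (dist (\<gamma> x) (\<gamma> c))"
      by (intro add_right_mono cl_cons tl(2) tx)
    finally show ?thesis .
  qed
qed

lemma cl_fin:
  assumes "curve_length \<gamma> 0 1 < \<infinity>" "0 \<le> a" "a \<le> b" "b \<le> 1"
  shows "curve_length \<gamma> a b < \<infinity>"
proof -
  have "curve_length \<gamma> 0 1 = curve_length \<gamma> 0 a + (curve_length \<gamma> a b + curve_length \<gamma> b 1)"
    using cl_add[of 0 a 1 \<gamma>] cl_add[of a b 1 \<gamma>] assms by simp
  then have "curve_length \<gamma> a b \<le> curve_length \<gamma> 0 1"
    by (metis add.commute add.left_commute le_iff_add)
  then show ?thesis using assms(1) by (simp add: le_less_trans)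
qed

lemma ell_add:
  assumes "curve_length \<gamma> 0 1 < \<infinity>" "0 \<le> a" "a \<le> b" "b \<le> c" "c \<le> 1"
  shows "enn2real (curve_length \<gamma> a c) = enn2real (curve_length \<gamma> a b) + enn2real (curve_length \<gamma> b c)"
  using cl_add[of a b c \<gamma>] assms cl_fin[OF assms(1), of a b] cl_fin[OF assms(1), of b c]
  by (simp add: enn2real_plus)


lemma ell_zero:
  assumes "curve_length \<gamma> 0 1 < \<infinity>" "0 \<le> a" "a \<le> 1"
  shows "enn2real (curve_length \<gamma> a a) = 0"
  using ell_add[OF assms(1), of a a a] assms by simp

lemma ell_mono:
  assumes "curve_length \<gamma> 0 1 < \<infinity>" "0 \<le> a" "a \<le> b" "b \<le> c" "c \<le> 1"
  shows "enn2real (curve_length \<gamma> a b) \<le> enn2real (curve_length \<gamma> a c)"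
  using ell_add[OF assms] by simp

lemma right_small:
  assumes fin: "curve_length \<gamma> 0 1 < \<infinity>" and gc: "continuous_on {0..1} \<gamma>"
    and t0: "0 \<le> t0" "t0 < 1" and e: "\<eta> > 0"
  shows "\<exists>x. t0 < x \<and> x \<le> 1 \<and> enn2real (curve_length \<gamma> t0 x) < \<eta>"
proof (cases "enn2real (curve_length \<gamma> t0 1) < \<eta>")
  case True then show ?thesis by (intro exI[of _ 1]) (use t0 in auto)
next
  case False
  define L where "L = curve_length \<gamma> t0 1"
  have Lf: "L < \<infinity>" using cl_fin[OF fin, of t0 1] t0 by (simp add: L_def)
  have "ennreal (enn2real L - \<eta>/2) < ennreal (enn2real L)"
    using False e by (subst ennreal_less_iff) (auto simp: L_def)
  then have "ennreal (enn2real L - \<eta>/2) < (SUP p\<in>parts t0 1. psum \<gamma> p)"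
    using Lf by (simp add: L_def cl_def)
  then obtain p where p: "p \<in> parts t0 1" "ennreal (enn2real L - \<eta>/2) < psum \<gamma> p"
    by (auto simp: less_SUP_iff)
  obtain n t where pn: "p = (n, t)" by (cases p)
  have ptn: "(n, t) \<in> parts t0 1" using p pn by simp
  define M where "M = t ` {i. i \<le> n \<and> t0 < t i}"
  have finM: "finite M" unfolding M_def by (rule finite_imageI) (rule finite_subset[of _ "{..n}"], auto)
  have "t n = 1" using ptn by (simp add: parts_def)
  then have "1 \<in> M" using t0 unfolding M_def by force
  then have Mne: "M \<noteq> {}" by blast
  define m0 where "m0 = Min M"
  have m0M: "m0 \<in> M" using Min_in[OF finM Mne] by (simp add: m0_def)
  then obtain i0 where i0: "i0 \<le> n" "t0 < t i0" "m0 = t i0" unfolding M_def by blast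
  have m0r: "t0 < m0" "m0 \<le> 1" using i0 parts_range[OF ptn i0(1)] by auto
  have m0le: "m0 \<le> t i" if "i \<le> n" "t0 < t i" for i
    unfolding m0_def using that by (intro Min_le finM) (auto simp: M_def)
  obtain d where d: "d > 0" "\<forall>x'\<in>{0..1}. dist x' t0 < d \<longrightarrow> dist (\<gamma> x') (\<gamma> t0) < \<eta>/2"
    using gc t0 e unfolding continuous_on_iff by (metis atLeastAtMost_iff half_gt_zero less_imp_le)
  define x where "x = min m0 (t0 + d/2)"
  have x: "t0 < x" "x \<le> 1" using m0r d by (auto simp: x_def)
  have "dist x t0 < d" using x d by (auto simp: x_def dist_real_def)
  then have dx: "dist (\<gamma> t0) (\<gamma> x) < \<eta>/2" using d x t0 by (auto simp: dist_commute)
  have cond: "\<forall>i\<le>n. t i = t0 \<or> x \<le> t i"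
  proof (intro allI impI)
    fix i assume "i \<le> n"
    then have "t0 \<le> t i" using parts_range[OF ptn] by blast
    then show "t i = t0 \<or> x \<le> t i" using m0le[OF \<open>i \<le> n\<close>] by (force simp: x_def)
  qed
  have "psum \<gamma> (n, t) \<le> ennreal (dist (\<gamma> t0) (\<gamma> x)) + curve_length \<gamma> x 1"
    by (rule psum_le_right[OF ptn x(1) cond])
  also have "curve_length \<gamma> x 1 = ennreal (enn2real (curve_length \<gamma> x 1))"
    using cl_fin[OF fin, of x 1] x t0 by simp
  finally have "ennreal (enn2real L - \<eta>/2) < ennreal (dist (\<gamma> t0) (\<gamma> x) + enn2real (curve_length \<gamma> x 1))"
    using p pn by (simp add: ennreal_plus[symmetric] del: ennreal_plus)
  then have "enn2real L - \<eta>/2 < dist (\<gamma> t0) (\<gamma> x) + enn2real (curve_length \<gamma> x 1)"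
    using False e by (subst (asm) ennreal_less_iff) (auto simp: L_def)
  moreover have "enn2real L = enn2real (curve_length \<gamma> t0 x) + enn2real (curve_length \<gamma> x 1)"
    unfolding L_def by (rule ell_add[OF fin]) (use x t0 in auto)
  ultimately have "enn2real (curve_length \<gamma> t0 x) < \<eta>" using dx by simp
  then show ?thesis using x by blast
qed

lemma left_small:
  assumes fin: "curve_length \<gamma> 0 1 < \<infinity>" and gc: "continuous_on {0..1} \<gamma>"
    and t0: "0 < t0" "t0 \<le> 1" and e: "\<eta> > 0"
  shows "\<exists>x. 0 \<le> x \<and> x < t0 \<and> enn2real (curve_length \<gamma> x t0) < \<eta>"
proof (cases "enn2real (curve_length \<gamma> 0 t0) < \<eta>")
  case True then show ?thesis by (intro exI[of _ 0]) (use t0 in auto)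
next
  case False
  define L where "L = curve_length \<gamma> 0 t0"
  have Lf: "L < \<infinity>" using cl_fin[OF fin, of 0 t0] t0 by (simp add: L_def)
  have "ennreal (enn2real L - \<eta>/2) < ennreal (enn2real L)"
    using False e by (subst ennreal_less_iff) (auto simp: L_def)
  then have "ennreal (enn2real L - \<eta>/2) < (SUP p\<in>parts 0 t0. psum \<gamma> p)"
    using Lf by (simp add: L_def cl_def)
  then obtain p where p: "p \<in> parts 0 t0" "ennreal (enn2real L - \<eta>/2) < psum \<gamma> p"
    by (auto simp: less_SUP_iff)
  obtain n t where pn: "p = (n, t)" by (cases p)
  have ptn: "(n, t) \<in> parts 0 t0" using p pn by simp
  define M where "M = t ` {i. i \<le> n \<and> t i < t0}"
  have finM: "finite M" unfolding M_def by (rule finite_imageI) (rule finite_subset[of _ "{..n}"], auto)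
  have "t 0 = 0" using ptn by (simp add: parts_def)
  then have "0 \<in> M" using t0 unfolding M_def by force
  then have Mne: "M \<noteq> {}" by blast
  define m0 where "m0 = Max M"
  have m0M: "m0 \<in> M" using Max_in[OF finM Mne] by (simp add: m0_def)
  then obtain i0 where i0: "i0 \<le> n" "t i0 < t0" "m0 = t i0" unfolding M_def by blast
  have m0r: "m0 < t0" "0 \<le> m0" using i0 parts_range[OF ptn i0(1)] by auto
  have m0le: "t i \<le> m0" if "i \<le> n" "t i < t0" for i
    unfolding m0_def using that by (intro Max_ge finM) (auto simp: M_def)
  obtain d where d: "d > 0" "\<forall>x'\<in>{0..1}. dist x' t0 < d \<longrightarrow> dist (\<gamma> x') (\<gamma> t0) < \<eta>/2"
    using gc t0 e unfolding continuous_on_iff by (metis atLeastAtMost_iff half_gt_zero less_imp_le)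
  define x where "x = max m0 (t0 - d/2)"
  have x: "x < t0" "0 \<le> x" using m0r d by (auto simp: x_def)
  have "dist x t0 < d" using x d by (auto simp: x_def dist_real_def)
  then have dx: "dist (\<gamma> x) (\<gamma> t0) < \<eta>/2" using d x t0 by auto
  have cond: "\<forall>i\<le>n. t i = t0 \<or> t i \<le> x"
  proof (intro allI impI)
    fix i assume "i \<le> n"
    then have "t i \<le> t0" using parts_range[OF ptn] by blast
    then show "t i = t0 \<or> t i \<le> x" using m0le[OF \<open>i \<le> n\<close>] by (force simp: x_def)
  qed
  have "psum \<gamma> (n, t) \<le> curve_length \<gamma> 0 x + ennreal (dist (\<gamma> x) (\<gamma> t0))"
    by (rule psum_le_left[OF ptn cond])
  also have "curve_length \<gamma> 0 x = ennreal (enn2real (curve_length \<gamma> 0 x))"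
    using cl_fin[OF fin, of 0 x] x t0 by simp
  finally have "ennreal (enn2real L - \<eta>/2) < ennreal (enn2real (curve_length \<gamma> 0 x) + dist (\<gamma> x) (\<gamma> t0))"
    using p pn by (simp add: ennreal_plus[symmetric] del: ennreal_plus)
  then have "enn2real L - \<eta>/2 < enn2real (curve_length \<gamma> 0 x) + dist (\<gamma> x) (\<gamma> t0)"
    using False e by (subst (asm) ennreal_less_iff) (auto simp: L_def)
  moreover have "enn2real L = enn2real (curve_length \<gamma> 0 x) + enn2real (curve_length \<gamma> x t0)"
    unfolding L_def by (rule ell_add[OF fin]) (use x t0 in auto)
  ultimately have "enn2real (curve_length \<gamma> x t0) < \<eta>" using dx by simp
  then show ?thesis using x by blast
qed

lemma arclen_cont:
  assumes fin: "curve_length \<gamma> 0 1 < \<infinity>" and gc: "continuous_on {0..1} \<gamma>"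
  shows "continuous_on {0..1} (\<lambda>t. enn2real (curve_length \<gamma> 0 t))"
  unfolding continuous_on_iff
proof (intro ballI allI impI)
  fix t0 :: real and e :: real assume t0: "t0 \<in> {0..1}" and e: "0 < e"
  have R: "\<exists>dR>0. \<forall>y. t0 \<le> y \<and> y \<le> 1 \<and> y - t0 < dR \<longrightarrow> enn2real (curve_length \<gamma> t0 y) < e"
  proof (cases "t0 < 1")
    case True
    obtain x where x: "t0 < x" "x \<le> 1" "enn2real (curve_length \<gamma> t0 x) < e"
      using right_small[OF fin gc _ True e] t0 by auto
    show ?thesis
    proof (intro exI[of _ "x - t0"] conjI allI impI)
      fix y assume y: "t0 \<le> y \<and> y \<le> 1 \<and> y - t0 < x - t0"
      have "enn2real (curve_length \<gamma> t0 y) \<le> enn2real (curve_length \<gamma> t0 x)"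
        by (rule ell_mono[OF fin]) (use y t0 x in auto)
      then show "enn2real (curve_length \<gamma> t0 y) < e" using x by simp
    qed (use x in auto)
  next
    case False
    show ?thesis
    proof (intro exI[of _ 1] conjI allI impI)
      fix y assume y: "t0 \<le> y \<and> y \<le> 1 \<and> y - t0 < 1"
      then have "y = t0" using False by simp
      then show "enn2real (curve_length \<gamma> t0 y) < e" using ell_zero[OF fin, of t0] t0 e by simp
    qed simp
  qed
  have L: "\<exists>dL>0. \<forall>y. 0 \<le> y \<and> y \<le> t0 \<and> t0 - y < dL \<longrightarrow> enn2real (curve_length \<gamma> y t0) < e"
  proof (cases "0 < t0")
    case True
    obtain x where x: "0 \<le> x" "x < t0" "enn2real (curve_length \<gamma> x t0) < e"
      using left_small[OF fin gc True _ e] t0 by auto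
    show ?thesis
    proof (intro exI[of _ "t0 - x"] conjI allI impI)
      fix y assume y: "0 \<le> y \<and> y \<le> t0 \<and> t0 - y < t0 - x"
      have "enn2real (curve_length \<gamma> x t0) = enn2real (curve_length \<gamma> x y) + enn2real (curve_length \<gamma> y t0)"
        by (rule ell_add[OF fin]) (use y t0 x in auto)
      then have "enn2real (curve_length \<gamma> y t0) \<le> enn2real (curve_length \<gamma> x t0)" by simp
      then show "enn2real (curve_length \<gamma> y t0) < e" using x by simp
    qed (use x in auto)
  next
    case False
    show ?thesis
    proof (intro exI[of _ 1] conjI allI impI)
      fix y assume y: "0 \<le> y \<and> y \<le> t0 \<and> t0 - y < 1"
      then have "y = t0" using False t0 by simp
      then show "enn2real (curve_length \<gamma> y t0) < e" using ell_zero[OF fin, of t0] t0 e by simp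
    qed simp
  qed
  obtain dR where dR: "dR > 0" "\<forall>y. t0 \<le> y \<and> y \<le> 1 \<and> y - t0 < dR \<longrightarrow> enn2real (curve_length \<gamma> t0 y) < e"
    using R by blast
  obtain dL where dL: "dL > 0" "\<forall>y. 0 \<le> y \<and> y \<le> t0 \<and> t0 - y < dL \<longrightarrow> enn2real (curve_length \<gamma> y t0) < e"
    using L by blast
  show "\<exists>d>0. \<forall>x'\<in>{0..1}. dist x' t0 < d \<longrightarrow>
      dist (enn2real (curve_length \<gamma> 0 x')) (enn2real (curve_length \<gamma> 0 t0)) < e"
  proof (intro exI[of _ "min dR dL"] conjI ballI impI)
    fix y assume y: "y \<in> {0..1}" and dy: "dist y t0 < min dR dL"
    show "dist (enn2real (curve_length \<gamma> 0 y)) (enn2real (curve_length \<gamma> 0 t0)) < e"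
    proof (cases "t0 \<le> y")
      case True
      have "enn2real (curve_length \<gamma> 0 y) = enn2real (curve_length \<gamma> 0 t0) + enn2real (curve_length \<gamma> t0 y)"
        by (rule ell_add[OF fin]) (use y t0 True in auto)
      moreover have "enn2real (curve_length \<gamma> t0 y) < e"
        using dR(2) True y dy by (auto simp: dist_real_def)
      ultimately show ?thesis by (simp add: dist_real_def)
    next
      case False
      have "enn2real (curve_length \<gamma> 0 t0) = enn2real (curve_length \<gamma> 0 y) + enn2real (curve_length \<gamma> y t0)"
        by (rule ell_add[OF fin]) (use y t0 False in auto)
      moreover have "enn2real (curve_length \<gamma> y t0) < e"
        using dL(2) False y dy by (auto simp: dist_real_def)
      ultimately show ?thesis by (simp add: dist_real_def)
    qed
  qed (use dR dL in auto)
qed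


lemma emeasure_lborel_shift:
  fixes c :: real
  assumes "A \<in> sets borel"
  shows "emeasure lborel ((\<lambda>y. y - c) -` A) = emeasure lborel A"
proof -
  have m: "(+) (-c) \<in> measurable lborel borel" by simp
  have "emeasure lborel A = emeasure (distr lborel borel ((+) (-c))) A"
    by (simp add: lborel_distr_plus)
  also have "\<dots> = emeasure lborel ((+) (-c) -` A \<inter> space lborel)"
    by (rule emeasure_distr[OF m assms])
  also have "(+) (-c) -` A \<inter> space lborel = (\<lambda>y. y - c) -` A" by auto
  finally show ?thesis by simp
qed

lemma nn_integral_shift_le:
  fixes c :: real
  shows "(\<integral>\<^sup>+x. F (x + c) \<partial>lborel) \<le> (\<integral>\<^sup>+x. F x \<partial>lborel)"
  unfolding nn_integral_def[of lborel "\<lambda>x. F (x + c)"]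
proof (rule SUP_least)
  fix g assume g: "g \<in> {g. simple_function lborel g \<and> g \<le> (\<lambda>x. F (x + c))}"
  define g' where "g' y = g (y - c)" for y
  have gm: "g \<in> borel_measurable lborel" using g borel_measurable_simple_function[of lborel g] by simp
  then have gm': "g \<in> borel_measurable borel" by simp
  have "(\<lambda>y. g (y - c)) \<in> borel_measurable borel"
    by (rule measurable_compose[OF _ gm']) simp
  moreover have "g' = (\<lambda>y. g (y - c))" by (simp add: g'_def fun_eq_iff)
  ultimately have g'm: "g' \<in> borel_measurable lborel" by simp
  have img: "g' ` space lborel = g ` space lborel"
  proof (auto simp: g'_def image_iff)
    fix x show "\<exists>y. g x = g (y - c)" by (rule exI[of _ "x + c"]) simp
  qed
  have sg': "simple_function lborel g'"
    by (rule simple_function_borel_measurable[OF g'm]) (use g simple_functionD(1)[of lborel g] img in auto)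
  have le: "g' \<le> F"
  proof (rule le_funI)
    fix y
    have "g (y - c) \<le> F (y - c + c)" using g unfolding le_fun_def by blast
    then show "g' y \<le> F y" by (simp add: g'_def)
  qed
  have eq: "emeasure lborel (g' -` {v} \<inter> space lborel) = emeasure lborel (g -` {v} \<inter> space lborel)" for v
  proof -
    have "g -` {v} \<inter> space lborel \<in> sets borel" using g simple_functionD(2) by (metis mem_Collect_eq sets_lborel)
    moreover have "g' -` {v} \<inter> space lborel = (\<lambda>y. y - c) -` (g -` {v} \<inter> space lborel)"
      by (auto simp: g'_def)
    ultimately show ?thesis using emeasure_lborel_shift by metis
  qed
  have "integral\<^sup>S lborel g = integral\<^sup>S lborel g'"
    unfolding simple_integral_def img eq ..
  also have "\<dots> \<le> integral\<^sup>N lborel F"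
    unfolding nn_integral_def using sg' le by (intro SUP_upper) auto
  finally show "integral\<^sup>S lborel g \<le> integral\<^sup>N lborel F" .
qed

lemma aff_in:
  fixes s a b :: real
  assumes "0 \<le> s" "s \<le> 1" "a \<le> b"
  shows "a \<le> a + s*(b-a) \<and> a + s*(b-a) \<le> b"
proof -
  have "0 \<le> s*(b-a)" using assms by simp
  moreover have "s*(b-a) \<le> 1*(b-a)" using assms by (intro mult_right_mono) auto
  ultimately show ?thesis by simp
qed

lemma same_level:
  assumes fin: "curve_length \<gamma> 0 1 < \<infinity>" and t: "t1 \<in> {0..1}" "t2 \<in> {0..1}"
    and eq: "enn2real (curve_length \<gamma> 0 t1) = enn2real (curve_length \<gamma> 0 t2)"
  shows "\<gamma> t1 = \<gamma> t2"
proof -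
  have *: "\<gamma> x = \<gamma> y" if "x \<in> {0..1}" "y \<in> {0..1}" "x \<le> y"
      "enn2real (curve_length \<gamma> 0 x) = enn2real (curve_length \<gamma> 0 y)" for x y
  proof -
    have "enn2real (curve_length \<gamma> 0 y) = enn2real (curve_length \<gamma> 0 x) + enn2real (curve_length \<gamma> x y)"
      by (rule ell_add[OF fin]) (use that in auto)
    then have "enn2real (curve_length \<gamma> x y) = 0" using that by simp
    moreover have "curve_length \<gamma> x y < \<infinity>" using cl_fin[OF fin, of x y] that by auto
    ultimately have "curve_length \<gamma> x y = 0"
      by (metis ennreal_0 ennreal_enn2real infinity_ennreal_def)
    then have "ennreal (dist (\<gamma> x) (\<gamma> y)) \<le> 0" using dist_le_cl[OF that(3), of \<gamma>] by simp
    then show ?thesis by simp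
  qed
  show ?thesis
  proof (cases "t1 \<le> t2")
    case True then show ?thesis using * t eq by blast
  next
    case False then show ?thesis using *[of t2 t1] t eq by simp
  qed
qed

lemma subpath_li:
  fixes \<gamma> :: "real \<Rightarrow> 'b::metric_space"
  assumes gc: "continuous_on {0..1} \<gamma>" and gr: "loc_rectifiable \<gamma>" and ab: "0 \<le> a" "a < b" "b \<le> 1"
    and sg: "\<And>s. s \<in> {0..1} \<Longrightarrow> \<sigma> s = \<gamma> (a + s*(b-a))"
  shows "loc_rectifiable \<sigma> \<and> line_integral \<rho> \<sigma> \<le> line_integral \<rho> \<gamma>"
proof -
  have fin: "curve_length \<gamma> 0 1 < \<infinity>" using gr by (simp add: loc_rectifiable_def)
  define k where "k = b - a"
  have k: "k > 0" using ab by (simp add: k_def)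
  define s where "s t = enn2real (curve_length \<gamma> 0 t)" for t
  have scont: "continuous_on {0..1} s" unfolding s_def by (rule arclen_cont[OF fin gc])
  have aff: "a + u * k \<in> {a..b}" if "u \<in> {0..1}" for u
    using aff_in[of u a b] that ab by (auto simp: k_def)
  have clsig: "curve_length \<sigma> u v = curve_length \<gamma> (a + u * k) (a + v * k)"
    if "0 \<le> u" "u \<le> v" "v \<le> 1" for u v
  proof -
    have "curve_length \<sigma> u v = curve_length (\<lambda>s. \<gamma> (a + s * k)) u v"
      by (rule cl_cong) (use that sg in \<open>auto simp: k_def\<close>)
    also have "\<dots> = curve_length \<gamma> (a + u * k) (a + v * k)" by (rule cl_aff[OF k])
    finally show ?thesis .
  qed
  have lr: "loc_rectifiable \<sigma>"
    unfolding loc_rectifiable_def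
  proof (intro allI impI)
    fix u v :: real assume uv: "0 \<le> u \<and> u \<le> v \<and> v \<le> 1"
    have "a + u * k \<le> a + v * k" using uv k by (simp add: mult_right_mono)
    then show "curve_length \<sigma> u v < \<infinity>"
      using clsig[of u v] uv cl_fin[OF fin, of "a + u * k" "a + v * k"] aff[of u] aff[of v] ab by auto
  qed
  have arcsig: "arclen_fun \<sigma> u = s (a + u * k) - s a" if "u \<in> {0..1}" for u
  proof -
    have "arclen_fun \<sigma> u = enn2real (curve_length \<gamma> a (a + u * k))"
      using clsig[of 0 u] that by (simp add: arclen_fun_def)
    also have "\<dots> = s (a + u * k) - s a"
      using ell_add[OF fin, of 0 a "a + u * k"] aff[OF that] ab by (simp add: s_def)
    finally show ?thesis .
  qed
  define c0 where "c0 = s a"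
  define L where "L = arclen_fun \<sigma> 1"
  have L: "L = s b - s a" using arcsig[of 1] by (simp add: L_def k_def)
  have sab: "s a \<le> s b" unfolding s_def by (rule ell_mono[OF fin]) (use ab in auto)
  have key: "arc_param \<sigma> y = arc_param \<gamma> (y + c0)" if y: "y \<in> {0..L}" for y
  proof -
    obtain t where t: "a \<le> t" "t \<le> b" "s t = y + c0"
      using IVT'[of s a "y + c0" b] y L sab ab continuous_on_subset[OF scont, of "{a..b}"]
      by (force simp: c0_def)
    define u0 where "u0 = (t - a) / k"
    have u0: "u0 \<in> {0..1}" using t k by (auto simp: u0_def k_def)
    have "a + u0 * k = t" using k by (simp add: u0_def)
    then have "arclen_fun \<sigma> u0 = y" using arcsig[OF u0] t by (simp add: c0_def)
    then have ex1: "\<exists>u. u \<in> {0..1} \<and> arclen_fun \<sigma> u = y" using u0 by blast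
    define u1 where "u1 = (SOME u. u \<in> {0..1} \<and> arclen_fun \<sigma> u = y)"
    have u1: "u1 \<in> {0..1}" "arclen_fun \<sigma> u1 = y"
      using someI_ex[OF ex1] by (auto simp: u1_def)
    define t1 where "t1 = a + u1 * k"
    have t1: "t1 \<in> {a..b}" "s t1 = y + c0" using aff[OF u1(1)] arcsig[OF u1(1)] u1(2)
      by (auto simp: t1_def c0_def)
    have "arc_param \<sigma> y = \<sigma> u1" unfolding arc_param_def u1_def by (rule refl)
    then have ap1: "arc_param \<sigma> y = \<gamma> t1"
      using sg[OF u1(1)] by (simp add: t1_def k_def)
    have ex2: "\<exists>t. t \<in> {0..1} \<and> arclen_fun \<gamma> t = y + c0"
      using t1 ab by (intro exI[of _ t1]) (auto simp: arclen_fun_def s_def)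
    define t2 where "t2 = (SOME t. t \<in> {0..1} \<and> arclen_fun \<gamma> t = y + c0)"
    have t2: "t2 \<in> {0..1}" "s t2 = y + c0"
      using someI_ex[OF ex2] by (auto simp: t2_def arclen_fun_def s_def)
    have ap2: "arc_param \<gamma> (y + c0) = \<gamma> t2"
      unfolding arc_param_def t2_def by (rule refl)
    have "\<gamma> t1 = \<gamma> t2"
      by (rule same_level[OF fin]) (use t1 t2 ab in \<open>auto simp: s_def\<close>)
    then show ?thesis using ap1 ap2 by simp
  qed
  have "line_integral \<rho> \<sigma> = (\<integral>\<^sup>+ y. \<rho> (arc_param \<sigma> y) * indicator {0..L} y \<partial>lborel)"
    by (simp add: line_integral_def L_def)
  also have "\<dots> = (\<integral>\<^sup>+ y. (\<lambda>z. \<rho> (arc_param \<gamma> z) * indicator {c0..c0 + L} z) (y + c0) \<partial>lborel)"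
  proof (rule nn_integral_cong)
    fix y :: real
    show "\<rho> (arc_param \<sigma> y) * indicator {0..L} y =
        (\<lambda>z. \<rho> (arc_param \<gamma> z) * indicator {c0..c0 + L} z) (y + c0)"
      using key[of y] by (cases "y \<in> {0..L}") (auto simp: indicator_def)
  qed
  also have "\<dots> \<le> (\<integral>\<^sup>+ z. \<rho> (arc_param \<gamma> z) * indicator {c0..c0 + L} z \<partial>lborel)"
    by (rule nn_integral_shift_le)
  also have "\<dots> \<le> (\<integral>\<^sup>+ z. \<rho> (arc_param \<gamma> z) * indicator {0..arclen_fun \<gamma> 1} z \<partial>lborel)"
  proof (rule nn_integral_mono)
    fix z :: real
    have "s b \<le> s 1" unfolding s_def by (rule ell_mono[OF fin]) (use ab in auto)
    moreover have "0 \<le> c0" by (simp add: c0_def s_def)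
    ultimately have "{c0..c0 + L} \<subseteq> {0..arclen_fun \<gamma> 1}"
      using L by (auto simp: c0_def arclen_fun_def s_def)
    then show "\<rho> (arc_param \<gamma> z) * indicator {c0..c0 + L} z \<le> \<rho> (arc_param \<gamma> z) * indicator {0..arclen_fun \<gamma> 1} z"
      by (intro mult_left_mono) (auto simp: indicator_def)
  qed
  also have "\<dots> = line_integral \<rho> \<gamma>" by (simp add: line_integral_def)
  finally show ?thesis using lr by simp
qed


lemma lift_seq_value:
  fixes f :: "'a::metric_space \<Rightarrow> 'b::metric_space" and \<alpha> :: "real \<Rightarrow> 'a"
  assumes "a < c" "K \<subseteq> D" "open D"
    "continuous_on D f" "continuous_on {a..c} g" "\<forall>t\<in>{a..<c}. f (\<alpha> t) = g t"
    "\<forall>n. u n \<in> {a..<c}" "u \<longlonglongrightarrow> c" "(\<lambda>n. \<alpha> (u n)) \<longlonglongrightarrow> q" "q \<in> K"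
  shows "f q = g c"
proof -
  have qD: "q \<in> D" using assms by auto
  have "isCont f q" using assms(3,4) qD by (simp add: continuous_on_eq_continuous_at)
  then have 1: "(\<lambda>n. f (\<alpha> (u n))) \<longlonglongrightarrow> f q"
    using assms(9) isCont_tendsto_compose by blast
  have ev: "\<forall>\<^sub>F x in sequentially. u x \<in> {a..c}"
    by (rule always_eventually) (metis assms(7) atLeastAtMost_iff atLeastLessThan_iff less_imp_le)
  have 2: "(\<lambda>n. g (u n)) \<longlonglongrightarrow> g c"
    using continuous_on_tendsto_compose[OF assms(5) assms(8) _ ev] assms(1)
    by (auto simp: o_def)
  have "(\<lambda>n. f (\<alpha> (u n))) = (\<lambda>n. g (u n))" using assms(6,7) by auto
  then show ?thesis using 1 2 LIMSEQ_unique by metis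
qed

lemma lift_limit:
  fixes f :: "'a::metric_space \<Rightarrow> 'b::metric_space" and \<alpha> :: "real \<Rightarrow> 'a"
  assumes ac: "a < c" and ca: "continuous_on {a..<c} \<alpha>" and aK: "\<alpha> ` {a..<c} \<subseteq> K"
    and K: "compact K" "K \<subseteq> D" and D: "open D"
    and fc: "continuous_on D f" and fd: "discrete_map D f" and gc: "continuous_on {a..c} g"
    and lift: "\<forall>t\<in>{a..<c}. f (\<alpha> t) = g t"
  shows "\<exists>p\<in>K. (\<alpha> \<longlongrightarrow> p) (at_left c) \<and> f p = g c"
proof -
  have sK: "seq_compact K" using K(1) compact_imp_seq_compact by blast
  define u where "u n = c - (c - a) / 2 * inverse (real (Suc n))" for n
  have u_in: "\<forall>n. u n \<in> {a..<c}"
  proof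
    fix n
    have "inverse (real (Suc n)) \<le> 1" by (simp add: inverse_le_1_iff)
    define v where "v = (c - a) / 2 * inverse (real (Suc n))"
    have h1: "v \<le> (c - a) / 2"
      using ac \<open>inverse (real (Suc n)) \<le> 1\<close> unfolding v_def by (intro mult_left_le) auto
    have h2: "0 < v" using ac by (simp add: v_def)
    have "u n = c - v" by (simp add: u_def v_def)
    then show "u n \<in> {a..<c}" using ac h1 h2 unfolding atLeastLessThan_iff by (simp add: field_simps)
  qed
  have u_lim: "u \<longlonglongrightarrow> c"
  proof -
    have "(\<lambda>n. (c - a) / 2 * inverse (real (Suc n))) \<longlonglongrightarrow> 0"
      by (rule tendsto_mult_right_zero[OF LIMSEQ_inverse_real_of_nat])
    then show ?thesis unfolding u_def using tendsto_diff[OF tendsto_const, of _ 0 sequentially c] by simp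
  qed
  have "\<forall>n. \<alpha> (u n) \<in> K" using u_in aK by auto
  then obtain p r where p: "p \<in> K" "strict_mono r" "((\<lambda>n. \<alpha> (u n)) \<circ> r) \<longlonglongrightarrow> p"
    using seq_compactE[OF sK] by metis
  have ur_lim: "(u \<circ> r) \<longlonglongrightarrow> c" using LIMSEQ_subseq_LIMSEQ[OF u_lim p(2)] .
  have fp: "f p = g c"
    by (rule lift_seq_value[OF ac K(2) D fc gc lift, of "u \<circ> r"]) (use u_in ur_lim p in \<open>auto simp: o_def\<close>)
  have pD: "p \<in> D" using p K by auto
  obtain r0 where r0: "r0 > 0" "ball p r0 \<inter> (D \<inter> f -` {g c}) = {p}"
    using fd pD fp unfolding discrete_map_def by blast
  have "(\<alpha> \<longlongrightarrow> p) (at_left c)"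
  proof (rule ccontr)
    assume nt: "\<not> (\<alpha> \<longlongrightarrow> p) (at_left c)"
    then obtain e where e: "e > 0" "\<not> eventually (\<lambda>x. dist (\<alpha> x) p < e) (at_left c)"
      unfolding tendsto_iff by blast
    define e' where "e' = min e (r0/2)"
    have e'pos: "e' > 0" using e r0 by (simp add: e'_def)
    have far: "\<forall>b<c. \<exists>y. b < y \<and> y < c \<and> e' \<le> dist (\<alpha> y) p"
    proof (intro allI impI)
      fix b assume "b < c"
      from e(2) have "\<not> (\<exists>b<c. \<forall>y>b. y < c \<longrightarrow> dist (\<alpha> y) p < e)"
        unfolding eventually_at_left_field by blast
      then obtain y where "b < y" "y < c" "\<not> dist (\<alpha> y) p < e" using \<open>b < c\<close> by blast
      then show "\<exists>y. b < y \<and> y < c \<and> e' \<le> dist (\<alpha> y) p" by (auto simp: e'_def)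
    qed
    define h where "h = e' / 2"
    have hpos: "h > 0" "h < e'" "h < r0" using e'pos r0 by (auto simp: h_def e'_def)
    have near: "\<forall>y<c. \<exists>z. y < z \<and> z < c \<and> z \<ge> a \<and> dist (\<alpha> z) p < h"
    proof (intro allI impI)
      fix y assume "y < c"
      have ev1: "eventually (\<lambda>n. y < (u \<circ> r) n) sequentially"
        using order_tendstoD(1)[OF ur_lim \<open>y < c\<close>] by (simp add: o_def)
      have ev2: "eventually (\<lambda>n. dist (((\<lambda>n. \<alpha> (u n)) \<circ> r) n) p < h) sequentially"
        using p(3) hpos(1) tendsto_iff by blast
      from eventually_conj[OF ev1 ev2] obtain n where "y < (u \<circ> r) n" "dist (((\<lambda>n. \<alpha> (u n)) \<circ> r) n) p < h"
        unfolding eventually_sequentially by blast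
      then show "\<exists>z. y < z \<and> z < c \<and> z \<ge> a \<and> dist (\<alpha> z) p < h"
        using u_in by (intro exI[of _ "u (r n)"]) auto
    qed
    have cross: "\<forall>n. \<exists>w. max a (c - 1 / (real n + 1)) < w \<and> w < c \<and> dist (\<alpha> w) p = h"
    proof
      fix n
      define b where "b = max a (c - 1 / (real n + 1))"
      have "b < c" using ac by (simp add: b_def)
      then obtain y where y: "b < y" "y < c" "e' \<le> dist (\<alpha> y) p" using far by blast
      then obtain z where z: "y < z" "z < c" "dist (\<alpha> z) p < h" using near by blast
      have ya: "a \<le> y" using y by (simp add: b_def)
      have cont: "continuous_on {y..z} (\<lambda>t. dist (\<alpha> t) p)"
        by (intro continuous_intros continuous_on_subset[OF ca]) (use ya z in auto)
      obtain w where w: "y \<le> w" "w \<le> z" "dist (\<alpha> w) p = h"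
        using IVT2'[of "\<lambda>t. dist (\<alpha> t) p" z h y, OF _ _ _ cont] z y hpos by force
      show "\<exists>w. max a (c - 1 / (real n + 1)) < w \<and> w < c \<and> dist (\<alpha> w) p = h"
        using w y z unfolding b_def by (intro exI[of _ w]) auto
    qed
    from choice[OF cross] obtain w where w0: "\<forall>n. max a (c - 1 / (real n + 1)) < w n \<and> w n < c \<and> dist (\<alpha> (w n)) p = h"
      by blast
    then have w: "\<And>n. max a (c - 1 / (real n + 1)) < w n" "\<And>n. w n < c"
      "\<And>n. dist (\<alpha> (w n)) p = h" by auto
    have w_in: "\<forall>n. w n \<in> {a..<c}" using w by (auto simp: less_eq_real_def)
    have w_lim: "w \<longlonglongrightarrow> c"
    proof -
      have l1: "(\<lambda>n. c - 1 / (real n + 1)) \<longlonglongrightarrow> c"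
        using tendsto_diff[OF tendsto_const[of c] LIMSEQ_inverse_real_of_nat] by (simp add: divide_inverse add.commute)
      have "\<And>n. c - 1 / (real n + 1) \<le> w n" using w(1) by (simp add: less_imp_le)
      moreover have "\<And>n. w n \<le> c" using w(2) less_eq_real_def by blast
      ultimately show ?thesis
        using tendsto_sandwich[of "\<lambda>n. c - 1 / (real n + 1)" w sequentially "\<lambda>n. c" c] l1 by auto
    qed
    have "\<forall>n. \<alpha> (w n) \<in> K" using w_in aK by auto
    then obtain q r' where q: "q \<in> K" "strict_mono r'" "((\<lambda>n. \<alpha> (w n)) \<circ> r') \<longlonglongrightarrow> q"
      using seq_compactE[OF sK] by metis
    have fq: "f q = g c"
      by (rule lift_seq_value[OF ac K(2) D fc gc lift, of "w \<circ> r'"])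
        (use w_in LIMSEQ_subseq_LIMSEQ[OF w_lim q(2)] q in \<open>auto simp: o_def\<close>)
    have "(\<lambda>n. dist (((\<lambda>n. \<alpha> (w n)) \<circ> r') n) p) \<longlonglongrightarrow> dist q p"
      by (intro tendsto_dist q(3) tendsto_const)
    moreover have "(\<lambda>n. dist (((\<lambda>n. \<alpha> (w n)) \<circ> r') n) p) = (\<lambda>n. h)" using w(3) by auto
    ultimately have "(\<lambda>n. h) \<longlonglongrightarrow> dist q p" by simp
    then have dq: "dist q p = h" by (simp add: LIMSEQ_const_iff)
    have "q \<in> ball p r0 \<inter> (D \<inter> f -` {g c})" using dq hpos q K fq by (auto simp: dist_commute)
    then have "q = p" using r0 by blast
    then show False using dq hpos by simp
  qed
  then show ?thesis using p(1) fp by blast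
qed


lemma extend_cont:
  fixes \<alpha> :: "real \<Rightarrow> 'a::topological_space"
  assumes ac: "a < c" and ca: "continuous_on {a..<c} \<alpha>" and lim: "(\<alpha> \<longlongrightarrow> p) (at_left c)"
  shows "continuous_on {a..c} (\<lambda>t. if t < c then \<alpha> t else p)"
proof (rule continuous_on_IccI)
  let ?h = "\<lambda>t. if t < c then \<alpha> t else p"
  have "(\<alpha> \<longlongrightarrow> \<alpha> a) (at a within {a..<c})"
    using ca ac unfolding continuous_on_def by auto
  moreover have "at a within {a..<c} = at_right a"
    by (rule at_within_nhd[of a "{..<c}"]) (use ac in auto)
  ultimately have 1: "(\<alpha> \<longlongrightarrow> \<alpha> a) (at_right a)" by simp
  have ev1: "eventually (\<lambda>t. \<alpha> t = ?h t) (at_right a)"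
    unfolding eventually_at_right_field using ac by auto
  show "(?h \<longlongrightarrow> ?h a) (at_right a)"
    using tendsto_cong[OF ev1] 1 ac by simp
  have ev2: "eventually (\<lambda>t. \<alpha> t = ?h t) (at_left c)"
    unfolding eventually_at_left_field using ac by auto
  show "(?h \<longlongrightarrow> ?h c) (at_left c)"
    using tendsto_cong[OF ev2] lim by simp
  show "?h \<midarrow>x\<rightarrow> ?h x" if "a < x" "x < c" for x
  proof -
    have "continuous_on {a<..<c} \<alpha>" using ca by (rule continuous_on_subset) auto
    then have "isCont \<alpha> x" using that by (simp add: continuous_on_eq_continuous_at)
    moreover have "eventually (\<lambda>t. \<alpha> t = ?h t) (nhds x)"
      using eventually_nhds_in_open[of "{..<c}" x] that by (auto elim!: eventually_mono)
    ultimately have "isCont ?h x" using isCont_cong[of \<alpha> ?h x] by simp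
    then show ?thesis using that by (simp add: isCont_def)
  qed
qed (rule ac)

lemma glue_cont:
  fixes \<alpha> \<beta> :: "real \<Rightarrow> 'a::topological_space"
  assumes ac: "a < c" "c < e" and ca: "continuous_on {a..<c} \<alpha>" and lim: "(\<alpha> \<longlongrightarrow> p) (at_left c)"
    and cb: "continuous_on {c..<e} \<beta>" and bc: "\<beta> c = p"
  shows "continuous_on {a..<e} (\<lambda>t. if t < c then \<alpha> t else \<beta> t)"
proof -
  have "continuous_on ({a..c} \<union> {c..<e}) (\<lambda>t. if t < c then (if t < c then \<alpha> t else p) else \<beta> t)"
  proof (rule continuous_on_cases_local)
    show "closedin (top_of_set ({a..c} \<union> {c..<e})) {a..c}"
      by (rule closed_subset) auto
    have "{c..<e} = ({a..c} \<union> {c..<e}) \<inter> {c..}" using ac by auto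
    then show "closedin (top_of_set ({a..c} \<union> {c..<e})) {c..<e}"
      by (metis closedin_closed_Int closed_atLeast)
  qed (use extend_cont[OF ac(1) ca lim] cb bc in auto)
  moreover have "{a..c} \<union> {c..<e} = {a..<e}" using ac by auto
  ultimately show ?thesis by (simp cong: if_cong)
qed


lemma aff_in_strict:
  fixes s a b :: real
  assumes "0 < s" "s < 1" "a < b"
  shows "a < a + s*(b-a) \<and> a + s*(b-a) < b"
proof -
  have "0 < s*(b-a)" using assms by simp
  moreover have "s*(b-a) < 1*(b-a)" using assms by (intro mult_strict_right_mono) auto
  ultimately show ?thesis by simp
qed

lemma lift_sub:
  fixes f :: "'a::metric_space \<Rightarrow> 'b::metric_space"
  assumes "open D" "continuous_on D f" "discrete_map D f" "open_map_on D f" "condition_A D f"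
    "compact (closure (ball x0 \<epsilon>0))" "closure (ball x0 \<epsilon>0) \<subseteq> D" "0 < \<epsilon>" "\<epsilon> < \<epsilon>0"
    "\<gamma> \<in> curve_family (f ` closure (ball x0 \<epsilon>)) (frontier (f ` ball x0 \<epsilon>0)) UNIV"
  shows "\<exists>\<delta> a b. 0 \<le> a \<and> a < b \<and> b \<le> 1 \<and>
     \<delta> \<in> curve_family (sphere_set x0 \<epsilon>) (sphere_set x0 \<epsilon>0) (annulus x0 \<epsilon> \<epsilon>0) \<and>
     \<delta> ` {0..1} \<subseteq> D \<and> (\<forall>s\<in>{0..1}. f (\<delta> s) = \<gamma> (a + s*(b-a)))"
proof -
  from assms(10) have gc: "continuous_on {0..1} \<gamma>" and g0: "\<gamma> 0 \<in> f ` closure (ball x0 \<epsilon>)"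
    and g1: "\<gamma> 1 \<in> frontier (f ` ball x0 \<epsilon>0)" by (auto simp: curve_family_def)
  obtain x where x: "x \<in> closure (ball x0 \<epsilon>)" "f x = \<gamma> 0" using g0 by auto
  have "closure (ball x0 \<epsilon>) \<subseteq> cball x0 \<epsilon>"
    by (rule closure_minimal[OF ball_subset_cball closed_cball])
  then have xd: "dist x x0 \<le> \<epsilon>" using x by (auto simp: dist_commute)
  have "closure (ball x0 \<epsilon>) \<subseteq> closure (ball x0 \<epsilon>0)"
    by (rule closure_mono) (use assms(9) in auto)
  then have xD: "x \<in> D" using x assms(7) by auto
  have "continuous_on {0..<1} \<gamma>" by (rule continuous_on_subset[OF gc]) auto
  then have "\<exists>c \<alpha>. max_lifting D f \<gamma> 0 1 x c \<alpha>"
    using assms(5)[unfolded condition_A_def, rule_format, of 0 1 \<gamma> x] xD x by auto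
  then obtain c \<alpha> where "max_lifting D f \<gamma> 0 1 x c \<alpha>" by blast
  then have c0: "0 < c" "c \<le> 1" and a0: "\<alpha> 0 = x"
    and c\<alpha>: "continuous_on {0..<c} \<alpha>" and \<alpha>D: "\<alpha> ` {0..<c} \<subseteq> D"
    and f\<alpha>: "\<forall>t\<in>{0..<c}. f (\<alpha> t) = \<gamma> t"
    and maxl: "\<not> (\<exists>c' \<alpha>'. c < c' \<and> c' \<le> 1 \<and> is_lifting D f \<gamma> 0 c' \<alpha>' \<and> (\<forall>t\<in>{0..<c}. \<alpha>' t = \<alpha> t))"
    unfolding max_lifting_def is_lifting_def by auto
  have ext: "\<exists>T \<alpha>'. 0 \<le> T \<and> T \<le> 1 \<and> continuous_on {0..T} \<alpha>' \<and> \<alpha>' ` {0..T} \<subseteq> D \<and>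
      (\<forall>t\<in>{0..T}. f (\<alpha>' t) = \<gamma> t) \<and> \<alpha>' 0 = x \<and> \<epsilon>0 \<le> dist (\<alpha>' T) x0"
  proof (cases "\<exists>t\<in>{0..<c}. \<epsilon>0 \<le> dist (\<alpha> t) x0")
    case True
    then obtain t where t: "t \<in> {0..<c}" "\<epsilon>0 \<le> dist (\<alpha> t) x0" by blast
    have sub: "{0..t} \<subseteq> {0..<c}" using t by auto
    show ?thesis
      using t c0 a0 sub \<alpha>D f\<alpha> continuous_on_subset[OF c\<alpha> sub]
      by (intro exI[of _ t] exI[of _ \<alpha>]) auto
  next
    case False
    have inB: "\<alpha> ` {0..<c} \<subseteq> closure (ball x0 \<epsilon>0)"
    proof
      fix y assume "y \<in> \<alpha> ` {0..<c}"
      then have "y \<in> ball x0 \<epsilon>0" using False by (auto simp: dist_commute)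
      then show "y \<in> closure (ball x0 \<epsilon>0)" using closure_subset by blast
    qed
    have gcc: "continuous_on {0..c} \<gamma>" using gc c0 by (auto intro: continuous_on_subset)
    obtain p where p: "p \<in> closure (ball x0 \<epsilon>0)" "(\<alpha> \<longlongrightarrow> p) (at_left c)" "f p = \<gamma> c"
      using lift_limit[OF c0(1) c\<alpha> inB assms(6) assms(7) assms(1) assms(2) assms(3) gcc f\<alpha>] by blast
    have pD: "p \<in> D" using p assms(7) by auto
    have c1: "c = 1"
    proof (rule ccontr)
      assume "c \<noteq> 1"
      then have c1: "c < 1" using c0 by simp
      have "continuous_on {c..<1} \<gamma>" by (rule continuous_on_subset[OF gc]) (use c0 in auto)
      then have "\<exists>c2 \<alpha>2. max_lifting D f \<gamma> c 1 p c2 \<alpha>2"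
        using assms(5)[unfolded condition_A_def, rule_format, of c 1 \<gamma> p] c1 pD p by auto
      then obtain c2 \<alpha>2 where "max_lifting D f \<gamma> c 1 p c2 \<alpha>2" by blast
      then have c2: "c < c2" "c2 \<le> 1" and a2: "\<alpha>2 c = p"
        and c\<alpha>2: "continuous_on {c..<c2} \<alpha>2" and \<alpha>2D: "\<alpha>2 ` {c..<c2} \<subseteq> D"
        and f\<alpha>2: "\<forall>t\<in>{c..<c2}. f (\<alpha>2 t) = \<gamma> t"
        unfolding max_lifting_def is_lifting_def by auto
      define \<alpha>' where "\<alpha>' t = (if t < c then \<alpha> t else \<alpha>2 t)" for t
      have "continuous_on {0..<c2} \<alpha>'"
        unfolding \<alpha>'_def by (rule glue_cont[OF c0(1) c2(1) c\<alpha> p(2) c\<alpha>2 a2])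
      moreover have "\<alpha>' ` {0..<c2} \<subseteq> D" using \<alpha>D \<alpha>2D by (auto simp: \<alpha>'_def)
      moreover have "\<forall>t\<in>{0..<c2}. f (\<alpha>' t) = \<gamma> t" using f\<alpha> f\<alpha>2 by (auto simp: \<alpha>'_def)
      ultimately have "is_lifting D f \<gamma> 0 c2 \<alpha>'" by (simp add: is_lifting_def)
      moreover have "\<forall>t\<in>{0..<c}. \<alpha>' t = \<alpha> t" by (simp add: \<alpha>'_def)
      ultimately show False using maxl c2 by blast
    qed
    define \<alpha>' where "\<alpha>' t = (if t < 1 then \<alpha> t else p)" for t
    have cont: "continuous_on {0..1} \<alpha>'"
      unfolding \<alpha>'_def using extend_cont[OF c0(1) c\<alpha> p(2)] c1 by simp
    have img: "\<alpha>' ` {0..1} \<subseteq> D" using \<alpha>D pD c1 by (auto simp: \<alpha>'_def)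
    have fl: "\<forall>t\<in>{0..1}. f (\<alpha>' t) = \<gamma> t" using f\<alpha> p(3) c1 by (auto simp: \<alpha>'_def)
    have "p \<notin> ball x0 \<epsilon>0"
    proof
      assume pb: "p \<in> ball x0 \<epsilon>0"
      have "open (f ` ball x0 \<epsilon>0)"
        using assms(4) assms(7) closure_subset unfolding open_map_on_def by blast
      then have "frontier (f ` ball x0 \<epsilon>0) \<inter> f ` ball x0 \<epsilon>0 = {}"
        by (simp add: frontier_disjoint_eq)
      moreover have "\<gamma> 1 \<in> f ` ball x0 \<epsilon>0" using pb p(3) c1 by force
      ultimately show False using g1 by blast
    qed
    then have "\<epsilon>0 \<le> dist (\<alpha>' 1) x0" by (auto simp: \<alpha>'_def dist_commute)
    then show ?thesis using cont img fl a0
      by (intro exI[of _ 1] exI[of _ \<alpha>']) (auto simp: \<alpha>'_def)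
  qed
  then obtain T \<alpha>' where T: "0 \<le> T" "T \<le> 1" and c\<alpha>': "continuous_on {0..T} \<alpha>'"
    and \<alpha>'D: "\<alpha>' ` {0..T} \<subseteq> D" and f\<alpha>': "\<forall>t\<in>{0..T}. f (\<alpha>' t) = \<gamma> t"
    and a'0: "\<alpha>' 0 = x" and aT: "\<epsilon>0 \<le> dist (\<alpha>' T) x0"
    by blast
  define h where "h t = dist (\<alpha>' t) x0" for t
  have hc: "continuous_on {0..T} h" unfolding h_def by (intro continuous_intros c\<alpha>')
  have h0: "h 0 \<le> \<epsilon>" using xd a'0 by (simp add: h_def)
  have hT: "\<epsilon>0 \<le> h T" using aT by (simp add: h_def)
  define S2 where "S2 = {0..T} \<inter> h -` {\<epsilon>0..}"
  have "closed S2" unfolding S2_def by (rule continuous_closed_preimage[OF hc]) auto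
  moreover have "bounded S2" unfolding S2_def by (rule bounded_subset[of "{0..T}"]) auto
  ultimately have cS2: "compact S2" by (simp add: compact_eq_bounded_closed)
  have "T \<in> S2" using T hT by (simp add: S2_def)
  then obtain t2 where t2: "t2 \<in> S2" "\<forall>y\<in>S2. t2 \<le> y"
    using compact_attains_inf[OF cS2] by blast
  have t2T: "0 \<le> t2" "t2 \<le> T" "\<epsilon>0 \<le> h t2" using t2 by (auto simp: S2_def)
  have ht2: "h t2 = \<epsilon>0"
  proof -
    obtain s where s: "0 \<le> s" "s \<le> t2" "h s = \<epsilon>0"
      using IVT'[of h 0 \<epsilon>0 t2] h0 assms(9) t2T continuous_on_subset[OF hc, of "{0..t2}"] by force
    then have "s \<in> S2" using t2T by (auto simp: S2_def)
    then have "s = t2" using t2 s by force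
    then show ?thesis using s by simp
  qed
  have below2: "h t < \<epsilon>0" if "0 \<le> t" "t < t2" for t
  proof (rule ccontr)
    assume "\<not> h t < \<epsilon>0"
    then have "t \<in> S2" using that t2T by (auto simp: S2_def)
    then show False using t2 that by force
  qed
  define S1 where "S1 = {0..t2} \<inter> h -` {..\<epsilon>}"
  have "closed S1" unfolding S1_def
    by (rule continuous_closed_preimage[OF continuous_on_subset[OF hc]]) (use t2T in auto)
  moreover have "bounded S1" unfolding S1_def by (rule bounded_subset[of "{0..t2}"]) auto
  ultimately have cS1: "compact S1" by (simp add: compact_eq_bounded_closed)
  have "0 \<in> S1" using t2T h0 by (simp add: S1_def)
  then obtain t1 where t1: "t1 \<in> S1" "\<forall>y\<in>S1. y \<le> t1"
    using compact_attains_sup[OF cS1] by blast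
  have t1T: "0 \<le> t1" "t1 \<le> t2" "h t1 \<le> \<epsilon>" using t1 by (auto simp: S1_def)
  have t12: "t1 < t2" using t1T ht2 assms(9) by (metis order.not_eq_order_implies_strict not_le)
  have ht1: "h t1 = \<epsilon>"
  proof -
    obtain s where s: "t1 \<le> s" "s \<le> t2" "h s = \<epsilon>"
      using IVT'[of h t1 \<epsilon> t2] t1T ht2 assms(9) continuous_on_subset[OF hc, of "{t1..t2}"] t2T by force
    then have "s \<in> S1" using t1T by (auto simp: S1_def)
    then have "s = t1" using t1 s by force
    then show ?thesis using s by simp
  qed
  have above1: "\<epsilon> < h t" if "t1 < t" "t \<le> t2" for t
  proof (rule ccontr)
    assume "\<not> \<epsilon> < h t"
    then have "t \<in> S1" using that t1T by (auto simp: S1_def)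
    then show False using t1 that by force
  qed
  define \<delta> where "\<delta> s = \<alpha>' (t1 + s * (t2 - t1))" for s
  have affT: "t1 + s * (t2 - t1) \<in> {0..T}" if "s \<in> {0..1}" for s
    using aff_in[of s t1 t2] that t1T t2T by auto
  have "continuous_on {0..1} \<delta>"
    unfolding \<delta>_def
    by (rule continuous_on_compose2[OF c\<alpha>']) (auto intro!: continuous_intros affT)
  moreover have "\<delta> 0 \<in> sphere_set x0 \<epsilon>" using ht1 by (simp add: \<delta>_def sphere_set_def h_def)
  moreover have "\<delta> 1 \<in> sphere_set x0 \<epsilon>0" using ht2 by (simp add: \<delta>_def sphere_set_def h_def)
  moreover have "\<forall>s\<in>{0<..<1}. \<delta> s \<in> annulus x0 \<epsilon> \<epsilon>0"
  proof
    fix s :: real assume "s \<in> {0<..<1}"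
    then have "t1 < t1 + s * (t2 - t1)" "t1 + s * (t2 - t1) < t2"
      using aff_in_strict[of s t1 t2] t12 by auto
    then show "\<delta> s \<in> annulus x0 \<epsilon> \<epsilon>0"
      using above1 below2 t1T unfolding annulus_def \<delta>_def h_def by (auto intro: less_imp_le)
  qed
  ultimately have "\<delta> \<in> curve_family (sphere_set x0 \<epsilon>) (sphere_set x0 \<epsilon>0) (annulus x0 \<epsilon> \<epsilon>0)"
    by (simp add: curve_family_def)
  moreover have "\<delta> ` {0..1} \<subseteq> D" using \<alpha>'D affT by (auto simp: \<delta>_def)
  moreover have "\<forall>s\<in>{0..1}. f (\<delta> s) = \<gamma> (t1 + s*(t2-t1))" using f\<alpha>' affT by (auto simp: \<delta>_def)
  ultimately show ?thesis using t1T t12 t2T T by (intro exI[of _ \<delta>] exI[of _ t1] exI[of _ t2]) auto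
qed


lemma nn_integral_multc_le:
  fixes k :: ennreal
  assumes "k < \<infinity>"
  shows "(\<integral>\<^sup>+x. f x * k \<partial>M) \<le> integral\<^sup>N M f * k"
proof (cases "k = 0")
  case True then show ?thesis by simp
next
  case False
  have kk: "k * inverse k = 1"
    using ennreal_divide_self[OF False] assms by (simp add: divide_ennreal_def)
  show ?thesis
    unfolding nn_integral_def[of M "\<lambda>x. f x * k"]
  proof (rule SUP_least)
    fix g assume g: "g \<in> {g. simple_function M g \<and> g \<le> (\<lambda>x. f x * k)}"
    let ?g = "\<lambda>x. g x * inverse k"
    have sg: "simple_function M ?g" using g by auto
    have le: "?g \<le> f"
    proof (rule le_funI)
      fix x
      have "g x * inverse k \<le> f x * k * inverse k"
        using g by (auto simp: le_fun_def intro!: mult_right_mono)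
      also have "\<dots> = f x" by (simp add: mult.assoc kk)
      finally show "?g x \<le> f x" .
    qed
    have "\<And>x. k * (g x * inverse k) = g x" by (metis kk mult.commute mult.left_commute mult_1)
    then have "integral\<^sup>S M g = integral\<^sup>S M (\<lambda>x. k * ?g x)"
      by simp
    also have "\<dots> = k * integral\<^sup>S M ?g" using sg by simp
    also have "\<dots> \<le> k * integral\<^sup>N M f"
      using sg le by (intro mult_left_mono) (auto simp: nn_integral_def intro!: SUP_upper)
    finally show "integral\<^sup>S M g \<le> integral\<^sup>N M f * k" by (simp add: mult.commute)
  qed
qed

theorem lemma3:
  fixes \<mu> :: "'a::metric_space measure" and \<mu>' :: "'b::metric_space measure"
    and \<alpha> \<alpha>' :: real and D :: "'a set" and f :: "'a \<Rightarrow> 'b" and Q :: "'a \<Rightarrow> ennreal"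
    and x0 :: 'a and \<epsilon>0 \<epsilon>0' :: real and F :: "real \<Rightarrow> real \<Rightarrow> ennreal"
    and \<psi> :: "real \<Rightarrow> real \<Rightarrow> ennreal"
  assumes mu: "locally_finite_borel \<mu>" and mu': "locally_finite_borel \<mu>'"
    and dimX: "hausdorff_dim (UNIV :: 'a set) = ereal \<alpha>" and alpha: "\<alpha> \<ge> 2"
    and dimX': "hausdorff_dim (UNIV :: 'b set) = ereal \<alpha>'" and alpha': "\<alpha>' \<ge> 2"
    and D: "open D" "connected D" "D \<noteq> {}"
    and Q: "Q \<in> borel_measurable (restrict_space \<mu> D)"
    and f_cont: "continuous_on D f"
    and f_open: "open_map_on D f" and f_discrete: "discrete_map D f"
    and x0: "x0 \<in> D"
    and ring: "ring_Q_mapping \<mu> \<alpha> \<mu>' \<alpha>' D f Q x0"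
    and eps0: "0 < \<epsilon>0" "frontier D = {} \<or> \<epsilon>0 < infdist x0 (frontier D)"
    and cball: "compact (closure (ball x0 \<epsilon>0))" "closure (ball x0 \<epsilon>0) \<subseteq> D"
    and eps0': "0 < \<epsilon>0'" "\<epsilon>0' < \<epsilon>0"
    and psi_meas: "\<And>\<epsilon>. \<epsilon> \<in> {0<..<\<epsilon>0'} \<Longrightarrow> \<psi> \<epsilon> \<in> borel_measurable lebesgue"
    and F: "\<And>\<epsilon>. \<epsilon> \<in> {0<..<\<epsilon>0'} \<Longrightarrow>
       (\<integral>\<^sup>+ x \<in> annulus x0 \<epsilon> \<epsilon>0. Q x * epow (\<psi> \<epsilon> (dist x x0)) \<alpha> \<partial>\<mu>) \<le> F \<epsilon> \<epsilon>0"
    and I_pos: "\<And>\<epsilon>. \<epsilon> \<in> {0<..<\<epsilon>0'} \<Longrightarrow> 0 < (\<integral>\<^sup>+ t \<in> {\<epsilon><..<\<epsilon>0}. \<psi> \<epsilon> t \<partial>lebesgue)"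
    and I_fin: "\<And>\<epsilon>. \<epsilon> \<in> {0<..<\<epsilon>0'} \<Longrightarrow> (\<integral>\<^sup>+ t \<in> {\<epsilon><..<\<epsilon>0}. \<psi> \<epsilon> t \<partial>lebesgue) < \<infinity>"
    and condA: "condition_A D f"
  shows "\<forall>\<epsilon> \<in> {0<..<\<epsilon>0'}.
     modulus \<mu>' \<alpha>' (curve_family (f ` closure (ball x0 \<epsilon>)) (frontier (f ` ball x0 \<epsilon>0)) UNIV)
       \<le> F \<epsilon> \<epsilon>0 / epow (\<integral>\<^sup>+ t \<in> {\<epsilon><..<\<epsilon>0}. \<psi> \<epsilon> t \<partial>lebesgue) \<alpha>"
proof
  fix \<epsilon> assume e: "\<epsilon> \<in> {0<..<\<epsilon>0'}"
  define I where "I = (\<integral>\<^sup>+ t \<in> {\<epsilon><..<\<epsilon>0}. \<psi> \<epsilon> t \<partial>lebesgue)"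
  define \<Gamma> where "\<Gamma> = curve_family (f ` closure (ball x0 \<epsilon>)) (frontier (f ` ball x0 \<epsilon>0)) (UNIV::'b set)"
  define \<Gamma>' where "\<Gamma>' = image_family f D
            (curve_family (sphere_set x0 \<epsilon>) (sphere_set x0 \<epsilon>0) (annulus x0 \<epsilon> \<epsilon>0))"
  have Ipos: "0 < I" and Ifin: "I < \<infinity>" using I_pos[OF e] I_fin[OF e] by (auto simp: I_def)
  then obtain i where i: "I = ennreal i" "0 < i"
    by (metis ennreal_cases ennreal_less_zero_iff infinity_ennreal_def less_irrefl)
  define \<eta> where "\<eta> r = \<psi> \<epsilon> r * inverse I" for r
  have eta_meas: "\<eta> \<in> borel_measurable lebesgue"
    unfolding \<eta>_def using psi_meas[OF e] by measurable
  have "(\<integral>\<^sup>+ r \<in> {\<epsilon><..<\<epsilon>0}. \<eta> r \<partial>lebesgue) = (\<integral>\<^sup>+ r. (\<psi> \<epsilon> r * indicator {\<epsilon><..<\<epsilon>0} r) * inverse I \<partial>lebesgue)"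
    by (auto simp: \<eta>_def mult_ac intro!: nn_integral_cong)
  also have "\<dots> = I * inverse I"
    by (subst nn_integral_multc) (use psi_meas[OF e] in \<open>auto simp: I_def intro!: borel_measurable_times_ennreal borel_measurable_indicator\<close>)
  also have "\<dots> = 1" using Ipos Ifin ennreal_divide_self[of I] by (simp add: divide_ennreal_def)
  finally have eta_int: "(\<integral>\<^sup>+ r \<in> {\<epsilon><..<\<epsilon>0}. \<eta> r \<partial>lebesgue) = 1" .
  have e0: "0 < \<epsilon>" "\<epsilon> < \<epsilon>0" using e eps0' by auto
  have ringapp: "modulus \<mu>' \<alpha>' \<Gamma>' \<le> (\<integral>\<^sup>+ x \<in> annulus x0 \<epsilon> \<epsilon>0 \<inter> D. Q x * epow (\<eta> (dist x x0)) \<alpha> \<partial>\<mu>)"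
    using ring e0 eta_meas eta_int unfolding ring_Q_mapping_def \<Gamma>'_def by auto
  have annD: "annulus x0 \<epsilon> \<epsilon>0 \<inter> D = annulus x0 \<epsilon> \<epsilon>0"
  proof -
    have "annulus x0 \<epsilon> \<epsilon>0 \<subseteq> ball x0 \<epsilon>0" by (auto simp: annulus_def dist_commute)
    also have "\<dots> \<subseteq> D" using cball(2) closure_subset by blast
    finally show ?thesis by blast
  qed
  have epow_eq: "epow (v * inverse I) \<alpha> = epow v \<alpha> * inverse (epow I \<alpha>)" for v
  proof (cases "v = \<infinity>")
    case True
    have "inverse I \<noteq> 0" using Ifin by simp
    moreover have "inverse (epow I \<alpha>) \<noteq> 0" using i by (simp add: epow_def)
    ultimately show ?thesis using True by (simp add: epow_def ennreal_mult_eq_top_iff)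
  next
    case False
    then obtain y where y: "v = ennreal y" "0 \<le> y" by (cases v) auto
    have "v * inverse I = ennreal (y / i)"
      using y i by (simp add: inverse_ennreal ennreal_mult'' divide_real_def)
    moreover have "(y / i) powr \<alpha> = y powr \<alpha> * inverse (i powr \<alpha>)"
      using y i powr_divide[of y i \<alpha>] by (simp add: divide_real_def)
    ultimately show ?thesis using y i
      by (simp add: epow_def inverse_ennreal ennreal_mult'')
  qed
  have "(\<integral>\<^sup>+ x \<in> annulus x0 \<epsilon> \<epsilon>0 \<inter> D. Q x * epow (\<eta> (dist x x0)) \<alpha> \<partial>\<mu>)
      = (\<integral>\<^sup>+ x. (Q x * epow (\<psi> \<epsilon> (dist x x0)) \<alpha> * indicator (annulus x0 \<epsilon> \<epsilon>0) x) * inverse (epow I \<alpha>) \<partial>\<mu>)"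
    unfolding annD \<eta>_def epow_eq by (auto simp: mult_ac intro!: nn_integral_cong)
  also have "\<dots> \<le> (\<integral>\<^sup>+ x \<in> annulus x0 \<epsilon> \<epsilon>0. Q x * epow (\<psi> \<epsilon> (dist x x0)) \<alpha> \<partial>\<mu>) * inverse (epow I \<alpha>)"
    by (rule nn_integral_multc_le) (use i in \<open>simp add: epow_def inverse_ennreal\<close>)
  also have "\<dots> \<le> F \<epsilon> \<epsilon>0 * inverse (epow I \<alpha>)"
    by (rule mult_right_mono[OF F[OF e]]) simp
  finally have M1: "modulus \<mu>' \<alpha>' \<Gamma>' \<le> F \<epsilon> \<epsilon>0 / epow I \<alpha>"
    using ringapp by (simp add: divide_ennreal_def)
  have adm: "admissible \<rho> \<Gamma>" if "admissible \<rho> \<Gamma>'" for \<rho>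
    unfolding admissible_def
  proof (intro conjI ballI impI)
    show "\<rho> \<in> borel_measurable borel" using that by (simp add: admissible_def)
    fix \<gamma> assume g: "\<gamma> \<in> \<Gamma>" and gr: "loc_rectifiable \<gamma>"
    obtain \<delta> a b where ab: "0 \<le> a" "a < b" "b \<le> 1"
      and d: "\<delta> \<in> curve_family (sphere_set x0 \<epsilon>) (sphere_set x0 \<epsilon>0) (annulus x0 \<epsilon> \<epsilon>0)"
         "\<delta> ` {0..1} \<subseteq> D" "\<forall>s\<in>{0..1}. f (\<delta> s) = \<gamma> (a + s*(b-a))"
      using lift_sub[OF D(1) f_cont f_discrete f_open condA cball e0, of \<gamma>] g unfolding \<Gamma>_def
      by blast
    have gc: "continuous_on {0..1} \<gamma>" using g by (simp add: \<Gamma>_def curve_family_def)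
    have sub: "loc_rectifiable (f \<circ> \<delta>) \<and> line_integral \<rho> (f \<circ> \<delta>) \<le> line_integral \<rho> \<gamma>"
      by (rule subpath_li[OF gc gr ab]) (use d in auto)
    have "f \<circ> \<delta> \<in> \<Gamma>'" using d unfolding \<Gamma>'_def image_family_def by blast
    then have "1 \<le> line_integral \<rho> (f \<circ> \<delta>)" using that sub by (auto simp: admissible_def)
    then show "1 \<le> line_integral \<rho> \<gamma>" using sub by (meson order_trans)
  qed
  have "modulus \<mu>' \<alpha>' \<Gamma> \<le> modulus \<mu>' \<alpha>' \<Gamma>'"
    unfolding modulus_def by (rule INF_superset_mono) (use adm in auto)
  then show "modulus \<mu>' \<alpha>' (curve_family (f ` closure (ball x0 \<epsilon>)) (frontier (f ` ball x0 \<epsilon>0)) UNIV)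
       \<le> F \<epsilon> \<epsilon>0 / epow (\<integral>\<^sup>+ t \<in> {\<epsilon><..<\<epsilon>0}. \<psi> \<epsilon> t \<partial>lebesgue) \<alpha>"
    using M1 unfolding \<Gamma>_def I_def by simp
qed

end
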